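(* Let $\delta=x^{\mathbf d}f(\theta)$ be a homogeneous differential operator of degree $\mathbf d$ with $\mathbf d\neq\mathbf 0$, $-\mathbf d\in S$, $\mathbf d=q\mathbf e$ ($q\in\mathbb Z_{\ge1}$, $\mathbf e$ primitive). Then $\delta$ fixes some nonzero monomial ideal of $R$ if and only if there exists a subset $\mathcal B\subseteq\mathbb N^n$ compatible with $\mathbf d$ such that (1) $\operatorname{val}(\mathbf a)>-\infty$ for all $\mathbf a\in W_{\mathcal B}$; (2) for all $\mathbf a\in V'_{\mathrm{mon}}(f)\cap W_{\mathcal B}$ and $i=0,\dots,q-1$, $\mathbf a-i\mathbf e\in V_{\mathrm{mon}}(f)$; (3) for all $\mathbf a,\mathbf b\in V'_{\mathrm{mon}}(f)\cap W_{\mathcal B}$, $\mathbf a-\mathbf b\notin S-\mathbf e$. In this case $\delta$ fixes the ideal $I=(x^{\mathbf a}\mid\mathbf a\in V'_{\mathrm{mon}}(f)\cap W_{\mathcal B})$, and $\operatorname{Exp} I=\{\mathbf a\in W_{\mathcal B}:\operatorname{pval}(\mathbf a)\ge 0\}$.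
   Context: Standing notation. Fix $d\ge 1$. Let $\sigma\subseteq\mathbb R^d$ be a full-dimensional, strongly convex rational polyhedral cone, so $\sigma^\vee$ is full-dimensional and strongly convex. $S=\sigma^\vee\cap\mathbb Z^d$, $R=\mathbb C[S]$ with monomial basis $x^{\mathbf a}$, $\mathbf a\in S$. $h_1,\dots,h_n$ are the primitive support functions of the facets of $\sigma^\vee$, so $S=\{\mathbf a\in\mathbb Z^d:h_i(\mathbf a)\ge0\ \forall i\}$. $(g,m)!=\prod_{j=0}^m(g-j)$ for $m\ge0$, $=1$ for $m<0$; $H_{\mathbf d}=\prod_i(h_i,h_i(-\mathbf d)-1)!$. For $f$ divisible by $H_{\mathbf d}$, $\delta=x^{\mathbf d}f(\theta)$ acts by $\delta(x^{\mathbf a})=f(\mathbf a)x^{\mathbf a+\mathbf d}$. $\operatorname{Exp} I=\{\mathbf a\in S:x^{\mathbf a}\in I\}$; $I$ is $\delta$-fixed if $\delta(I)=I$. $V_{\mathrm{mon}}(f)=\{\mathbf a\in\mathbb Z^d:f(\mathbf a)=0\}$; $S-\mathbf e=\{\mathbf s-\mathbf e:\mathbf s\in S\}$. For $\mathbf a\in\mathbb Z^d$, $\operatorname{val}(\mathbf a)=\inf\{t\in\mathbb R:\mathbf a+t\mathbf d\in V_{\mathrm{mon}}(f)\}\in\mathbb R\cup\{\pm\infty\}$ ($\inf\emptyset=+\infty$). When $\operatorname{val}(\mathbf a)$ is finite, $\operatorname{pval}(\mathbf a)=\max\{t\in[\operatorname{val}(\mathbf a),\operatorname{val}(\mathbf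 a)+1):\mathbf a+t\mathbf d\in V_{\mathrm{mon}}(f)\}$ and $\operatorname{vpt}(\mathbf a)=\mathbf a+\operatorname{pval}(\mathbf a)\mathbf d$. $V'_{\mathrm{mon}}(f)=\{\operatorname{vpt}(\mathbf a):\mathbf a\in\mathbb Z^d,\ \operatorname{val}(\mathbf a)\text{ finite}\}$. A tuple $\beta\in\mathbb N^n$ is compatible with $\mathbf d$ if for every $i$, $\beta_i=0$ or $h_i(\mathbf d)=0$; $\mathcal B\subseteq\mathbb N^n$ is compatible with $\mathbf d$ if each element is. $W_\beta=\{\mathbf a\in S: h_i(\mathbf a)\ge\beta_i\ \forall i\}$, $W_{\mathcal B}=\bigcup_{\beta\in\mathcal B}W_\beta$. *)

theory Defs
  imports "HOL-Analysis.Analysis" "HOL-Library.Poly_Mapping" "HOL-Library.Extended_Real"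
begin

definition rvec :: "int^'n \<Rightarrow> real^'n" where
  "rvec a = (\<chi> j. real_of_int (a $ j))"

definition primitive_vec :: "int^'n \<Rightarrow> bool" where
  "primitive_vec v \<longleftrightarrow> (\<forall>k::int. (\<forall>j. k dvd v $ j) \<longrightarrow> \<bar>k\<bar> = 1)"

definition rat_poly_cone :: "(real^'n) set \<Rightarrow> bool" where
  "rat_poly_cone \<sigma> \<longleftrightarrow> (\<exists>V :: (int^'n) set. finite V \<and>
      \<sigma> = {x. \<exists>w. (\<forall>v\<in>V. w v \<ge> 0) \<and> x = (\<Sum>v\<in>V. w v *\<^sub>R rvec v)})"

definition strongly_convex :: "(real^'n) set \<Rightarrow> bool" where
  "strongly_convex \<sigma> \<longleftrightarrow> \<sigma> \<inter> uminus ` \<sigma> = {0}"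

definition dual_cone :: "(real^'n) set \<Rightarrow> (real^'n) set" where
  "dual_cone \<sigma> = {u. \<forall>v\<in>\<sigma>. u \<bullet> v \<ge> 0}"

definition semigp :: "(real^'n) set \<Rightarrow> (int^'n) set" where
  "semigp \<sigma> = {a. rvec a \<in> dual_cone \<sigma>}"

definition hint :: "int^'n \<Rightarrow> int^'n \<Rightarrow> int" where
  "hint c a = (\<Sum>j\<in>UNIV. c $ j * a $ j)"

definition hreal :: "int^'n \<Rightarrow> real^'n \<Rightarrow> real" where
  "hreal c u = (\<Sum>j\<in>UNIV. real_of_int (c $ j) * u $ j)"

definition facet_hyp :: "(real^'n) set \<Rightarrow> int^'n \<Rightarrow> (real^'n) set" where
  "facet_hyp \<sigma> c = {u \<in> dual_cone \<sigma>. hreal c u = 0}"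

text \<open>h_0,...,h_{n-1} (coefficient vectors c i) are exactly the primitive support
  functions of the facets of the dual cone, one per facet\<close>
definition facet_functions :: "(real^'n) set \<Rightarrow> nat \<Rightarrow> (nat \<Rightarrow> int^'n) \<Rightarrow> bool" where
  "facet_functions \<sigma> n c \<longleftrightarrow>
     (\<forall>i<n. primitive_vec (c i) \<and> (\<forall>u\<in>dual_cone \<sigma>. hreal (c i) u \<ge> 0)
            \<and> facet_hyp \<sigma> (c i) facet_of dual_cone \<sigma>)
   \<and> (\<forall>F. F facet_of dual_cone \<sigma> \<longrightarrow> (\<exists>i<n. F = facet_hyp \<sigma> (c i)))
   \<and> inj_on (\<lambda>i. facet_hyp \<sigma> (c i)) {..<n}"

type_synonym 'n cpoly = "('n \<Rightarrow>\<^sub>0 nat) \<Rightarrow>\<^sub>0 complex"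

definition peval :: "'n::finite cpoly \<Rightarrow> int^'n \<Rightarrow> complex" where
  "peval f a = (\<Sum>m\<in>Poly_Mapping.keys f. Poly_Mapping.lookup f m * (\<Prod>j\<in>UNIV. (complex_of_int (a $ j)) ^ Poly_Mapping.lookup m j))"

definition pconst :: "complex \<Rightarrow> 'n cpoly" where
  "pconst k = Poly_Mapping.single 0 k"

definition hpoly :: "int^'n \<Rightarrow> 'n::finite cpoly" where
  "hpoly c = (\<Sum>j\<in>UNIV. Poly_Mapping.single (Poly_Mapping.single j 1) (of_int (c $ j)))"

definition ffact :: "'n cpoly \<Rightarrow> int \<Rightarrow> 'n cpoly" where
  "ffact g m = (if m < 0 then 1 else (\<Prod>j\<in>{0..nat m}. g - pconst (of_nat j)))"

definition Hpoly :: "nat \<Rightarrow> (nat \<Rightarrow> int^'n) \<Rightarrow> int^'n \<Rightarrow> 'n::finite cpoly" where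
  "Hpoly n c d = (\<Prod>i<n. ffact (hpoly (c i)) (hint (c i) (- d) - 1))"

type_synonym 'n elt = "(int^'n) \<Rightarrow>\<^sub>0 complex"

definition ringR :: "(real^'n) set \<Rightarrow> 'n elt set" where
  "ringR \<sigma> = {p. Poly_Mapping.keys p \<subseteq> semigp \<sigma>}"

definition monom :: "int^'n \<Rightarrow> 'n elt" where
  "monom a = Poly_Mapping.single a 1"

definition is_ideal :: "(real^'n) set \<Rightarrow> 'n::finite elt set \<Rightarrow> bool" where
  "is_ideal \<sigma> I \<longleftrightarrow> I \<subseteq> ringR \<sigma> \<and> 0 \<in> I \<and> (\<forall>x\<in>I. \<forall>y\<in>I. x + y \<in> I)
      \<and> (\<forall>r\<in>ringR \<sigma>. \<forall>x\<in>I. r * x \<in> I)"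

definition ideal_gen :: "(real^'n) set \<Rightarrow> 'n::finite elt set \<Rightarrow> 'n elt set" where
  "ideal_gen \<sigma> X = \<Inter>{J. is_ideal \<sigma> J \<and> X \<subseteq> J}"

definition monomial_ideal :: "(real^'n) set \<Rightarrow> 'n::finite elt set \<Rightarrow> bool" where
  "monomial_ideal \<sigma> I \<longleftrightarrow> is_ideal \<sigma> I \<and> I = ideal_gen \<sigma> {monom a | a. monom a \<in> I}"

definition Exps :: "(real^'n) set \<Rightarrow> 'n elt set \<Rightarrow> (int^'n) set" where
  "Exps \<sigma> I = {a \<in> semigp \<sigma>. monom a \<in> I}"

text \<open>delta = x^d f(theta), acting by x^a |-> f(a) x^(a+d), extended linearly\<close>
definition delta :: "'n::finite cpoly \<Rightarrow> int^'n \<Rightarrow> 'n elt \<Rightarrow> 'n elt" where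
  "delta f d p = (\<Sum>a\<in>Poly_Mapping.keys p. Poly_Mapping.single (a + d) (Poly_Mapping.lookup p a * peval f a))"

definition Vmon :: "'n::finite cpoly \<Rightarrow> (int^'n) set" where
  "Vmon f = {a. peval f a = 0}"

definition tset :: "'n::finite cpoly \<Rightarrow> int^'n \<Rightarrow> int^'n \<Rightarrow> real set" where
  "tset f d a = {t. \<exists>b\<in>Vmon f. rvec b = rvec a + t *\<^sub>R rvec d}"

definition val :: "'n::finite cpoly \<Rightarrow> int^'n \<Rightarrow> int^'n \<Rightarrow> ereal" where
  "val f d a = Inf (ereal ` tset f d a)"

definition pval :: "'n::finite cpoly \<Rightarrow> int^'n \<Rightarrow> int^'n \<Rightarrow> real" where
  "pval f d a = Max {t \<in> tset f d a. real_of_ereal (val f d a) \<le> t \<and> t < real_of_ereal (val f d a) + 1}"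

definition Vmon' :: "'n::finite cpoly \<Rightarrow> int^'n \<Rightarrow> (int^'n) set" where
  "Vmon' f d = {b. \<exists>a. \<bar>val f d a\<bar> \<noteq> \<infinity> \<and> rvec b = rvec a + pval f d a *\<^sub>R rvec d}"

text \<open>tuples in N^n are functions nat => nat vanishing from index n on\<close>
definition compatible :: "nat \<Rightarrow> (nat \<Rightarrow> int^'n) \<Rightarrow> int^'n \<Rightarrow> (nat \<Rightarrow> nat) set \<Rightarrow> bool" where
  "compatible n c d B \<longleftrightarrow> (\<forall>\<beta>\<in>B. (\<forall>i\<ge>n. \<beta> i = 0) \<and> (\<forall>i<n. \<beta> i = 0 \<or> hint (c i) d = 0))"

definition Wset :: "(real^'n) set \<Rightarrow> nat \<Rightarrow> (nat \<Rightarrow> int^'n) \<Rightarrow> (nat \<Rightarrow> nat) set \<Rightarrow> (int^'n) set" where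
  "Wset \<sigma> n c B = (\<Union>\<beta>\<in>B. {a \<in> semigp \<sigma>. \<forall>i<n. hint (c i) a \<ge> int (\<beta> i)})"

end

theory Submission
  imports Defs
begin

definition mev :: "('n::finite \<Rightarrow>\<^sub>0 nat) \<Rightarrow> int^'n \<Rightarrow> complex" where
  "mev m a = (\<Prod>j\<in>UNIV. (complex_of_int (a $ j)) ^ Poly_Mapping.lookup m j)"

lemma mev_add: "mev (m1 + m2) a = mev m1 a * mev m2 a"
  by (simp add: mev_def lookup_add power_add prod.distrib)

lemma mev_zero[simp]: "mev 0 a = 1"
  by (simp add: mev_def)

lemma peval_alt: "peval f a = (\<Sum>m\<in>Poly_Mapping.keys f. Poly_Mapping.lookup f m * mev m a)"
  by (simp add: peval_def mev_def)

lemma peval_superset: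
  assumes "finite K" "Poly_Mapping.keys f \<subseteq> K"
  shows "peval f a = (\<Sum>m\<in>K. Poly_Mapping.lookup f m * mev m a)"
  unfolding peval_alt
  by (rule sum.mono_neutral_left) (use assms in \<open>auto simp: in_keys_iff\<close>)

lemma peval_add: "peval (f + g) a = peval f a + peval g a"
proof -
  let ?K = "Poly_Mapping.keys f \<union> Poly_Mapping.keys g"
  have k: "Poly_Mapping.keys (f+g) \<subseteq> ?K" by (rule keys_add)
  show ?thesis
    by (subst peval_superset[OF _ k], simp, subst peval_superset[of ?K f], simp, simp,
        subst peval_superset[of ?K g], simp, simp) (simp add: lookup_add distrib_right sum.distrib)
qed

lemma peval_zero[simp]: "peval 0 a = 0"
  by (simp add: peval_def)

lemma peval_sum: "peval (sum F A) a = (\<Sum>x\<in>A. peval (F x) a)"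
  by (induction A rule: infinite_finite_induct) (auto simp: peval_add)

lemma peval_single[simp]: "peval (Poly_Mapping.single m k) a = k * mev m a"
  by (cases "k = 0") (simp_all add: peval_alt)

lemma pm_expand: "f = (\<Sum>m\<in>Poly_Mapping.keys f. Poly_Mapping.single m (Poly_Mapping.lookup f m))"
proof (rule poly_mapping_eqI)
  fix k
  show "Poly_Mapping.lookup f k = Poly_Mapping.lookup (\<Sum>m\<in>Poly_Mapping.keys f. Poly_Mapping.single m (Poly_Mapping.lookup f m)) k"
    by (simp add: lookup_sum lookup_single when_def in_keys_iff sum.delta)
qed

lemma peval_mult: "peval (f * g) a = peval f a * peval g a"
proof -
  have "f * g = (\<Sum>m\<in>Poly_Mapping.keys f. Poly_Mapping.single m (Poly_Mapping.lookup f m)) *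
              (\<Sum>m\<in>Poly_Mapping.keys g. Poly_Mapping.single m (Poly_Mapping.lookup g m))"
    using pm_expand[of f] pm_expand[of g] by simp
  also have "\<dots> = (\<Sum>m1\<in>Poly_Mapping.keys f. \<Sum>m2\<in>Poly_Mapping.keys g.
       Poly_Mapping.single (m1+m2) (Poly_Mapping.lookup f m1 * Poly_Mapping.lookup g m2))"
    by (simp add: sum_distrib_left sum_distrib_right mult_single) (rule sum.swap)
  finally have "peval (f*g) a = (\<Sum>m1\<in>Poly_Mapping.keys f. \<Sum>m2\<in>Poly_Mapping.keys g.
       (Poly_Mapping.lookup f m1 * mev m1 a) * (Poly_Mapping.lookup g m2 * mev m2 a))"
    by (simp add: peval_sum mev_add mult_ac)
  then show ?thesis by (simp add: peval_alt sum_product mult_ac)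
qed

lemma peval_one[simp]: "peval 1 a = 1"
  using peval_single[of 0 1 a] by (simp del: peval_single)

lemma peval_prod: "peval (prod F A) a = (\<Prod>x\<in>A. peval (F x) a)"
  by (induction A rule: infinite_finite_induct) (auto simp: peval_mult)

lemma peval_minus: "peval (f - g) a = peval f a - peval g a"
  using peval_add[of "f - g" g a] by simp

lemma peval_pconst[simp]: "peval (pconst k) a = k"
  by (simp add: pconst_def)

lemma peval_hpoly[simp]: "peval (hpoly c) a = of_int (hint c a)"
proof -
  have m: "mev (Poly_Mapping.single j 1) a = of_int (a $ j)" for j
  proof -
    have "mev (Poly_Mapping.single j 1) a = (\<Prod>j'\<in>UNIV. (complex_of_int (a $ j')) ^ (if j = j' then 1 else 0))"
      unfolding mev_def lookup_single when_def by (rule prod.cong) auto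
    also have "\<dots> = (\<Prod>j'\<in>UNIV. (if j = j' then complex_of_int (a $ j') else 1))"
      by (rule prod.cong) auto
    also have "\<dots> = of_int (a $ j)"
      by (subst prod.delta') auto
    finally show ?thesis .
  qed
  show ?thesis using m by (simp add: hpoly_def peval_sum hint_def)
qed

lemma peval_ffact: "peval (ffact g m) a = (if m < 0 then 1 else (\<Prod>j\<in>{0..nat m}. peval g a - of_nat j))"
  by (simp add: ffact_def peval_prod peval_minus)

lemma peval_dvd: "g dvd f \<Longrightarrow> peval g a = 0 \<Longrightarrow> peval f a = 0"
  by (auto simp: dvd_def peval_mult)

lemma peval_Hpoly_zero:
  assumes "i < n" "0 \<le> hint (c i) a" "hint (c i) a \<le> hint (c i) (- d) - 1"
  shows "peval (Hpoly n c d) a = 0"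
proof -
  have "peval (ffact (hpoly (c i)) (hint (c i) (- d) - 1)) a = 0"
    using assms(2,3) unfolding peval_ffact
    by (auto intro!: bexI[of _ "nat (hint (c i) a)"])
  then show ?thesis using assms(1)
    by (auto simp: Hpoly_def peval_prod intro!: prod_zero bexI[of _ i])
qed


lemma hreal_inner: "hreal c u = rvec c \<bullet> u"
  by (simp add: hreal_def rvec_def inner_vec_def)

lemma hreal_rvec: "hreal c (rvec a) = real_of_int (hint c a)"
  by (simp add: hreal_def rvec_def hint_def)

lemma rvec_add: "rvec (a + b) = rvec a + rvec b"
  by (simp add: rvec_def vec_eq_iff)
lemma rvec_minus: "rvec (- a) = - rvec a"
  by (simp add: rvec_def vec_eq_iff)
lemma rvec_diff: "rvec (a - b) = rvec a - rvec b"
  by (simp add: rvec_def vec_eq_iff)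
lemma rvec_zero[simp]: "rvec 0 = 0"
  by (simp add: rvec_def vec_eq_iff)
lemma rvec_smult: "rvec (k *s a) = real_of_int k *\<^sub>R rvec a"
  by (simp add: rvec_def vec_eq_iff)
lemma rvec_inj: "rvec a = rvec b \<longleftrightarrow> a = b"
  by (simp add: rvec_def vec_eq_iff)

lemma hint_add: "hint c (a + b) = hint c a + hint c b"
  by (simp add: hint_def algebra_simps sum.distrib)
lemma hint_minus: "hint c (- a) = - hint c a"
  by (simp add: hint_def sum_negf)
lemma hint_diff: "hint c (a - b) = hint c a - hint c b"
  by (simp add: hint_def algebra_simps sum_subtractf)
lemma hint_smult: "hint c (k *s a) = k * hint c a"
  by (simp add: hint_def sum_distrib_left mult_ac)
lemma hint_zero[simp]: "hint c 0 = 0"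
  by (simp add: hint_def)

lemma dual_cone_add: "u \<in> dual_cone \<sigma> \<Longrightarrow> v \<in> dual_cone \<sigma> \<Longrightarrow> u + v \<in> dual_cone \<sigma>"
  by (auto simp: dual_cone_def inner_add_left intro: add_nonneg_nonneg)
lemma dual_cone_scale: "u \<in> dual_cone \<sigma> \<Longrightarrow> 0 \<le> r \<Longrightarrow> r *\<^sub>R u \<in> dual_cone \<sigma>"
  by (auto simp: dual_cone_def)
lemma dual_cone_zero: "0 \<in> dual_cone \<sigma>"
  by (auto simp: dual_cone_def)

lemma semigp_add: "a \<in> semigp \<sigma> \<Longrightarrow> b \<in> semigp \<sigma> \<Longrightarrow> a + b \<in> semigp \<sigma>"
  by (simp add: semigp_def rvec_add dual_cone_add)
lemma semigp_zero[simp]: "0 \<in> semigp \<sigma>"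
  by (simp add: semigp_def dual_cone_zero)
lemma semigp_smult: "a \<in> semigp \<sigma> \<Longrightarrow> 0 \<le> k \<Longrightarrow> k *s a \<in> semigp \<sigma>"
  by (simp add: semigp_def rvec_smult dual_cone_scale)

lemma primitive_nz: "primitive_vec c \<Longrightarrow> c \<noteq> 0"
proof
  assume p: "primitive_vec c" and "c = 0"
  then have "\<bar>2::int\<bar> = 1" unfolding primitive_vec_def by (metis dvd_0_right zero_index)
  then show False by simp
qed

lemma rvec_nz: "c \<noteq> 0 \<Longrightarrow> rvec c \<noteq> 0"
  using rvec_inj[of c 0] by simp

lemma facet_nonneg:
  assumes "facet_functions \<sigma> n c" "i < n" "a \<in> semigp \<sigma>"
  shows "hint (c i) a \<ge> 0"
proof -
  have "hreal (c i) (rvec a) \<ge> 0" using assms unfolding facet_functions_def semigp_def by blast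
  then show ?thesis by (simp add: hreal_rvec)
qed

section \<open>Cone geometry\<close>

locale cone_setup =
  fixes \<sigma> :: "(real^'n::finite) set" and n :: nat and c :: "nat \<Rightarrow> int^'n"
  assumes cone: "rat_poly_cone \<sigma>" and fulldim: "interior \<sigma> \<noteq> {}"
    and strong: "strongly_convex \<sigma>"
    and facets: "facet_functions \<sigma> n c"
begin

abbreviation D where "D \<equiv> dual_cone \<sigma>"

lemma sigma_rep: obtains V :: "(int^'n) set" where "finite V"
   "\<sigma> = {x. \<exists>w. (\<forall>v\<in>V. w v \<ge> 0) \<and> x = (\<Sum>v\<in>V. w v *\<^sub>R rvec v)}"
  using cone unfolding rat_poly_cone_def by blast

lemma polyhedron_D: "polyhedron D"
proof -
  obtain V where V: "finite V" "\<sigma> = {x. \<exists>w. (\<forall>v\<in>V. w v \<ge> 0) \<and> x = (\<Sum>v\<in>V. w v *\<^sub>R rvec v)}"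
    by (rule sigma_rep)
  have "D = \<Inter>((\<lambda>v. {u. rvec v \<bullet> u \<ge> 0}) ` V)"
  proof (intro equalityI subsetI)
    fix u assume u: "u \<in> D"
    show "u \<in> \<Inter>((\<lambda>v. {u. rvec v \<bullet> u \<ge> 0}) ` V)"
    proof (clarsimp)
      fix v assume "v \<in> V"
      then have "rvec v \<in> \<sigma>" unfolding V
        by (auto intro!: exI[of _ "\<lambda>x. if x = v then 1 else 0"] simp: if_distrib[of "\<lambda>r. r *\<^sub>R _"] V(1) cong: if_cong)
      then show "0 \<le> rvec v \<bullet> u" using u by (auto simp: dual_cone_def inner_commute)
    qed
  next
    fix u assume u: "u \<in> \<Inter>((\<lambda>v. {u. rvec v \<bullet> u \<ge> 0}) ` V)"
    show "u \<in> D" unfolding dual_cone_def V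
      using u by (auto simp: inner_sum_right inner_commute intro!: sum_nonneg)
  qed
  then show ?thesis using V(1) by (auto intro!: polyhedron_Inter polyhedron_halfspace_ge)
qed

lemma sigma_cone: "x \<in> \<sigma> \<Longrightarrow> y \<in> \<sigma> \<Longrightarrow> x + y \<in> \<sigma>" "x \<in> \<sigma> \<Longrightarrow> 0 \<le> r \<Longrightarrow> r *\<^sub>R x \<in> \<sigma>"
  "0 \<in> \<sigma>"
proof -
  obtain V where V: "finite V" "\<sigma> = {x. \<exists>w. (\<forall>v\<in>V. w v \<ge> 0) \<and> x = (\<Sum>v\<in>V. w v *\<^sub>R rvec v)}"
    by (rule sigma_rep)
  show "x \<in> \<sigma> \<Longrightarrow> y \<in> \<sigma> \<Longrightarrow> x + y \<in> \<sigma>"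
  proof -
    assume "x \<in> \<sigma>" "y \<in> \<sigma>"
    then obtain w1 w2 where "\<forall>v\<in>V. w1 v \<ge> 0" "x = (\<Sum>v\<in>V. w1 v *\<^sub>R rvec v)"
      "\<forall>v\<in>V. w2 v \<ge> 0" "y = (\<Sum>v\<in>V. w2 v *\<^sub>R rvec v)" unfolding V by blast
    then show "x + y \<in> \<sigma>" unfolding V
      by (intro CollectI exI[of _ "\<lambda>v. w1 v + w2 v"]) (simp add: scaleR_add_left sum.distrib)
  qed
  show "x \<in> \<sigma> \<Longrightarrow> 0 \<le> r \<Longrightarrow> r *\<^sub>R x \<in> \<sigma>"
  proof -
    assume "x \<in> \<sigma>" "0 \<le> r"
    then obtain w1 where "\<forall>v\<in>V. w1 v \<ge> 0" "x = (\<Sum>v\<in>V. w1 v *\<^sub>R rvec v)"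
      unfolding V by blast
    then show "r *\<^sub>R x \<in> \<sigma>" unfolding V using \<open>0 \<le> r\<close>
      by (intro CollectI exI[of _ "\<lambda>v. r * w1 v"]) (simp add: scaleR_sum_right)
  qed
  show "0 \<in> \<sigma>" unfolding V by (auto intro!: exI[of _ "\<lambda>_. 0"])
qed

lemma sigma_gen: "\<exists>V :: (int^'n) set. finite V \<and> (\<forall>v\<in>V. rvec v \<in> \<sigma>) \<and>
   D = {u. \<forall>v\<in>V. rvec v \<bullet> u \<ge> 0}"
proof -
  obtain V where V: "finite V" "\<sigma> = {x. \<exists>w. (\<forall>v\<in>V. w v \<ge> 0) \<and> x = (\<Sum>v\<in>V. w v *\<^sub>R rvec v)}"
    by (rule sigma_rep)
  have g: "rvec v \<in> \<sigma>" if "v \<in> V" for v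
    using that unfolding V
    by (auto intro!: exI[of _ "\<lambda>x. if x = v then 1 else 0"] simp: if_distrib[of "\<lambda>r. r *\<^sub>R _"] V(1) cong: if_cong)
  have "D = {u. \<forall>v\<in>V. rvec v \<bullet> u \<ge> 0}"
  proof (intro equalityI subsetI)
    fix u assume u: "u \<in> D"
    then show "u \<in> {u. \<forall>v\<in>V. rvec v \<bullet> u \<ge> 0}"
      using g by (auto simp: dual_cone_def inner_commute)
  next
    fix u assume u: "u \<in> {u. \<forall>v\<in>V. rvec v \<bullet> u \<ge> 0}"
    show "u \<in> D" unfolding dual_cone_def V
      using u by (auto simp: inner_sum_right inner_commute intro!: sum_nonneg)
  qed
  then show ?thesis using V(1) g by blast
qed

lemma interior_D: "interior D \<noteq> {}"
proof -
  obtain V where V: "finite V" "\<And>v. v \<in> V \<Longrightarrow> rvec v \<in> \<sigma>" "D = {u. \<forall>v\<in>V. rvec v \<bullet> u \<ge> 0}"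
    using sigma_gen by blast
  define T where "T = rvec ` V - {0}"
  have Tfin: "finite T" using V(1) by (simp add: T_def)
  have Tsig: "x \<in> \<sigma>" if "x \<in> T" for x using that V(2) by (auto simp: T_def)
  have comb: "(\<Sum>x\<in>A. w x *\<^sub>R x) \<in> \<sigma>" if "A \<subseteq> T" "\<forall>x\<in>A. w x \<ge> 0" for A w
  proof -
    have "finite A" using that Tfin finite_subset by blast
    then show ?thesis using that
      by (induction A rule: finite_induct) (auto intro!: sigma_cone(1)[OF sigma_cone(2)[OF Tsig]] sigma_cone(3))
  qed
  have "0 \<notin> convex hull T"
  proof
    assume "0 \<in> convex hull T"
    then obtain w where w: "\<forall>x\<in>T. 0 \<le> w x" "sum w T = 1" "(\<Sum>x\<in>T. w x *\<^sub>R x) = 0"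
      unfolding convex_hull_finite[OF Tfin] by auto
    have "\<exists>x0\<in>T. w x0 \<noteq> 0"
    proof (rule ccontr)
      assume "\<not> ?thesis"
      then have "sum w T = 0" by simp
      then show False using w(2) by simp
    qed
    then obtain x0 where x0': "x0 \<in> T" "w x0 \<noteq> 0" by blast
    with w(1) have x0: "x0 \<in> T" "w x0 > 0" by (auto simp: order_le_less)
    have split: "(\<Sum>x\<in>T. w x *\<^sub>R x) = w x0 *\<^sub>R x0 + (\<Sum>x\<in>T - {x0}. w x *\<^sub>R x)"
      using x0(1) Tfin by (simp add: sum.remove)
    have m1: "w x0 *\<^sub>R x0 \<in> \<sigma>" using x0 by (intro sigma_cone(2) Tsig) auto
    have m2: "(\<Sum>x\<in>T - {x0}. w x *\<^sub>R x) \<in> \<sigma>" using comb[of "T - {x0}" w] w(1) by auto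
    have "w x0 *\<^sub>R x0 = - (\<Sum>x\<in>T - {x0}. w x *\<^sub>R x)" using split w(3) by (simp add: eq_neg_iff_add_eq_0)
    then have "w x0 *\<^sub>R x0 \<in> uminus ` \<sigma>" by (rule image_eqI[OF _ m2])
    then have "w x0 *\<^sub>R x0 \<in> \<sigma> \<inter> uminus ` \<sigma>" using m1 by (rule IntI[rotated])
    then have "w x0 *\<^sub>R x0 = 0" using strong unfolding strongly_convex_def by blast
    then show False using x0 by (auto simp: T_def)
  qed
  then obtain a b where ab: "a \<noteq> 0" "0 < b" "\<forall>x\<in>convex hull T. inner a x > b"
    using separating_hyperplane_closed_0[OF convex_convex_hull compact_imp_closed[OF finite_imp_compact_convex_hull[OF Tfin]] \<open>0 \<notin> convex hull T\<close>]
    by blast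
  define M where "M = 1 + (\<Sum>x\<in>T. norm x)"
  have M: "M > 0" "\<And>x. x \<in> T \<Longrightarrow> norm x \<le> M"
  proof -
    show "M > 0" unfolding M_def by (simp add: add_pos_nonneg sum_nonneg)
    fix x assume "x \<in> T"
    then have "norm x \<le> (\<Sum>x\<in>T. norm x)"
      using Tfin by (intro member_le_sum) auto
    then show "norm x \<le> M" unfolding M_def by simp
  qed
  have "ball a (b / M) \<subseteq> D"
  proof
    fix u assume u: "u \<in> ball a (b / M)"
    show "u \<in> D" unfolding V(3)
    proof (intro CollectI ballI)
      fix v assume v: "v \<in> V"
      show "0 \<le> rvec v \<bullet> u"
      proof (cases "rvec v = 0")
        case True then show ?thesis by simp
      next
        case False
        then have xT: "rvec v \<in> T" using v by (auto simp: T_def)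
        have "inner a (rvec v) > b" by (rule ab(3)[rule_format, OF hull_inc[OF xT]])
        moreover have "\<bar>inner (u - a) (rvec v)\<bar> \<le> norm (u - a) * norm (rvec v)"
          by (rule Cauchy_Schwarz_ineq2)
        moreover have "norm (u - a) * norm (rvec v) \<le> (b / M) * M"
          using u M xT ab(2) by (intro mult_mono) (auto simp: dist_norm norm_minus_commute less_imp_le)
        moreover have "rvec v \<bullet> u = inner a (rvec v) + inner (u - a) (rvec v)"
          by (simp add: inner_diff_left inner_diff_right inner_commute)
        moreover have "(b / M) * M = b" using M by simp
        ultimately show ?thesis by linarith
      qed
    qed
  qed
  moreover have "a \<in> ball a (b / M)" using M ab by simp
  ultimately have "a \<in> interior D" using interior_maximal[OF _ open_ball] by blast
  then show ?thesis by auto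
qed

end

lemma pos_interior:
  fixes c' :: "'a::euclidean_space"
  assumes "c' \<noteq> 0" "D \<subseteq> {x. c' \<bullet> x \<ge> 0}" "u0 \<in> interior D"
  shows "c' \<bullet> u0 > 0"
proof -
  obtain e where e: "e > 0" "ball u0 e \<subseteq> D" using assms(3) by (meson mem_interior)
  define p where "p = u0 - ((e/2) / norm c') *\<^sub>R c'"
  have "dist u0 p < e" using e assms(1) by (simp add: p_def dist_norm)
  then have "p \<in> D" using e by auto
  then have "c' \<bullet> p \<ge> 0" using assms(2) by auto
  moreover have "c' \<bullet> p = c' \<bullet> u0 - (e/2) * norm c'"
    using assms(1) by (simp add: p_def inner_diff_right dot_square_norm power2_eq_square)
  moreover have "(e/2) * norm c' > 0" using e assms(1) by simp
  ultimately show ?thesis by linarith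
qed

lemma halfspace_from_facet:
  fixes a c' :: "'a::euclidean_space"
  assumes fac: "C facet_of D" and Ca: "C \<subseteq> {x. a \<bullet> x = b}" and Da: "D \<subseteq> {x. a \<bullet> x \<le> b}"
    and Cc: "C \<subseteq> {x. c' \<bullet> x = 0}" and c0: "c' \<noteq> 0" and Dc: "D \<subseteq> {x. c' \<bullet> x \<ge> 0}"
    and u0: "u0 \<in> interior D" and u: "c' \<bullet> u \<ge> 0"
  shows "a \<bullet> u \<le> b"
proof -
  have "affine hull D = UNIV" using u0 affine_hull_nonempty_interior by blast
  then have adD: "aff_dim D = int DIM('a)" by (metis aff_dim_UNIV aff_dim_affine_hull)
  have adC: "aff_dim C = int DIM('a) - 1" using fac adD by (simp add: facet_of_def)
  have Cne: "C \<noteq> {}" using fac by (simp add: facet_of_def)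
  have h1: "affine hull C \<subseteq> {x. c' \<bullet> x = 0}" using Cc by (intro hull_minimal affine_hyperplane)
  have h2: "affine hull C \<subseteq> {x. a \<bullet> x = b}" using Ca by (intro hull_minimal affine_hyperplane)
  have "affine hull C = {x. c' \<bullet> x = 0}"
  proof (rule affine_dim_equal)
    show "affine (affine hull C)" by simp
    show "affine {x. c' \<bullet> x = 0}" by (rule affine_hyperplane)
    show "affine hull C \<noteq> {}" using Cne by simp
    show "affine hull C \<subseteq> {x. c' \<bullet> x = 0}" by (rule h1)
    show "aff_dim (affine hull C) = aff_dim {x. c' \<bullet> x = 0}" using adC c0 by simp
  qed
  with h2 have H: "\<And>x. c' \<bullet> x = 0 \<Longrightarrow> a \<bullet> x = b" by auto
  have b0: "b = 0" using H[of 0] by simp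
  have cu0: "c' \<bullet> u0 > 0" using pos_interior[OF c0 Dc u0] .
  have au0: "a \<bullet> u0 \<le> 0" using Da u0 b0 interior_subset by blast
  define w where "w = (c' \<bullet> u0) *\<^sub>R u - (c' \<bullet> u) *\<^sub>R u0"
  have "c' \<bullet> w = 0" by (simp add: w_def inner_diff_right)
  then have "a \<bullet> w = 0" using H b0 by simp
  then have eq: "(c' \<bullet> u0) * (a \<bullet> u) = (c' \<bullet> u) * (a \<bullet> u0)" by (simp add: w_def inner_diff_right)
  have "(c' \<bullet> u) * (a \<bullet> u0) \<le> 0" using u au0 by (simp add: mult_nonneg_nonpos)
  then have "(c' \<bullet> u0) * (a \<bullet> u) \<le> 0" using eq by simp
  then show ?thesis using cu0 b0 by (simp add: mult_le_0_iff)
qed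

lemma floor_bound: "real_of_int c * real_of_int (floor y) \<ge> real_of_int c * y - \<bar>real_of_int c\<bar>"
proof (cases "c \<ge> 0")
  case True
  have "real_of_int c * (y - 1) \<le> real_of_int c * real_of_int (floor y)"
    using True by (intro mult_left_mono) linarith+
  then show ?thesis using True by (simp add: algebra_simps)
next
  case False
  have "real_of_int c * y \<le> real_of_int c * real_of_int (floor y)"
    using False by (intro mult_left_mono_neg) auto
  then show ?thesis by simp
qed

context cone_setup
begin

lemma facet_c: "i < n \<Longrightarrow> primitive_vec (c i) \<and> (\<forall>u\<in>D. hreal (c i) u \<ge> 0) \<and> facet_hyp \<sigma> (c i) facet_of D"
  using facets by (simp add: facet_functions_def)

lemma D_iff: "u \<in> D \<longleftrightarrow> (\<forall>i<n. hreal (c i) u \<ge> 0)"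
proof
  assume "u \<in> D" then show "\<forall>i<n. hreal (c i) u \<ge> 0" using facet_c by blast
next
  assume hu: "\<forall>i<n. hreal (c i) u \<ge> 0"
  obtain u0 where u0: "u0 \<in> interior D" using interior_D by blast
  have aD: "affine hull D = UNIV" using u0 affine_hull_nonempty_interior by blast
  obtain F where F: "finite F" "D = affine hull D \<inter> \<Inter>F"
    "\<And>h. h \<in> F \<Longrightarrow> \<exists>a b. a \<noteq> 0 \<and> h = {x. a \<bullet> x \<le> b}"
    "\<And>F'. F' \<subset> F \<Longrightarrow> D \<subset> affine hull D \<inter> \<Inter>F'"
    using polyhedron_D by (simp add: polyhedron_Int_affine_minimal) meson
  then obtain a b where ab: "\<And>h. h \<in> F \<Longrightarrow> a h \<noteq> 0 \<and> h = {x. a h \<bullet> x \<le> b h}"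
    by metis
  have "u \<in> h" if hF: "h \<in> F" for h
  proof -
    have fac: "D \<inter> {x. a h \<bullet> x = b h} facet_of D"
      using facet_of_polyhedron_explicit[OF F(1) F(2) ab F(4)] hF by blast
    then obtain i where i: "i < n" "D \<inter> {x. a h \<bullet> x = b h} = facet_hyp \<sigma> (c i)"
      using facets unfolding facet_functions_def by blast
    have Dh: "D \<subseteq> {x. a h \<bullet> x \<le> b h}" using F(2) ab hF by blast
    have "a h \<bullet> u \<le> b h"
    proof (rule halfspace_from_facet[OF fac])
      show "D \<inter> {x. a h \<bullet> x = b h} \<subseteq> {x. a h \<bullet> x = b h}" by blast
      show "D \<subseteq> {x. a h \<bullet> x \<le> b h}" by (rule Dh)
      show "D \<inter> {x. a h \<bullet> x = b h} \<subseteq> {x. rvec (c i) \<bullet> x = 0}"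
        using i(2) by (auto simp: facet_hyp_def hreal_inner)
      show "rvec (c i) \<noteq> 0" using facet_c[OF i(1)] primitive_nz rvec_nz by blast
      show "D \<subseteq> {x. rvec (c i) \<bullet> x \<ge> 0}" using facet_c[OF i(1)] by (auto simp: hreal_inner)
      show "u0 \<in> interior D" by (rule u0)
      show "rvec (c i) \<bullet> u \<ge> 0" using hu i(1) by (simp add: hreal_inner)
    qed
    then show ?thesis using ab hF by blast
  qed
  then show "u \<in> D" using F(2) aD by blast
qed

lemma S_iff: "a \<in> semigp \<sigma> \<longleftrightarrow> (\<forall>i<n. hint (c i) a \<ge> 0)"
  by (simp add: semigp_def D_iff hreal_rvec)

lemma S_pos_point: "\<exists>a. a \<in> semigp \<sigma> \<and> (\<forall>i<n. hint (c i) a \<ge> 1)"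
proof -
  obtain u0 where u0: "u0 \<in> interior D" using interior_D by blast
  have pos: "hreal (c i) u0 > 0" if "i < n" for i
    using pos_interior[of "rvec (c i)" D u0] facet_c[OF that] primitive_nz rvec_nz u0
    by (auto simp: hreal_inner)
  define K where "K i = 1 + (\<Sum>j\<in>UNIV. \<bar>real_of_int (c i $ j)\<bar>)" for i
  define N where "N = (\<Sum>i<n. K i / hreal (c i) u0)"
  have KN: "N * hreal (c i) u0 \<ge> K i" if "i < n" for i
  proof -
    have "K i / hreal (c i) u0 \<le> N" unfolding N_def
      using that pos by (intro member_le_sum) (auto simp: K_def intro!: divide_nonneg_pos add_nonneg_nonneg sum_nonneg)
    then show ?thesis using pos[OF that] by (simp add: divide_le_eq)
  qed
  define a where "a = (\<chi> j. floor (N * u0 $ j))"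
  have "hint (c i) a \<ge> 1" if "i < n" for i
  proof -
    have "real_of_int (hint (c i) a) = (\<Sum>j\<in>UNIV. real_of_int (c i $ j) * real_of_int (floor (N * u0 $ j)))"
      by (simp add: hint_def a_def)
    also have "\<dots> \<ge> (\<Sum>j\<in>UNIV. real_of_int (c i $ j) * (N * u0 $ j) - \<bar>real_of_int (c i $ j)\<bar>)"
      by (intro sum_mono floor_bound)
    also have "(\<Sum>j\<in>UNIV. real_of_int (c i $ j) * (N * u0 $ j) - \<bar>real_of_int (c i $ j)\<bar>)
        = N * hreal (c i) u0 - (K i - 1)"
      by (simp add: K_def hreal_def sum_subtractf sum_distrib_left mult_ac)
    finally have "real_of_int (hint (c i) a) \<ge> 1" using KN[OF that] by linarith
    then show ?thesis by simp
  qed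
  moreover then have "a \<in> semigp \<sigma>" unfolding S_iff
    by (meson order_trans zero_le_one)
  ultimately show ?thesis by blast
qed

lemma d_facet:
  assumes dnz: "d \<noteq> 0" and dS: "- d \<in> semigp \<sigma>"
  shows "\<exists>i<n. hint (c i) d < 0"
proof (rule ccontr)
  assume "\<not> ?thesis"
  then have "d \<in> semigp \<sigma>" unfolding S_iff by (meson not_le)
  then have z: "rvec d \<bullet> v = 0" if "v \<in> \<sigma>" for v
    using dS that by (force simp: semigp_def dual_cone_def rvec_minus)
  obtain x where x: "x \<in> interior \<sigma>" using fulldim by blast
  then obtain e where e: "e > 0" "ball x e \<subseteq> \<sigma>" by (meson mem_interior)
  have rd: "rvec d \<noteq> 0" using dnz rvec_nz by blast
  define y where "y = x + ((e/2) / norm (rvec d)) *\<^sub>R rvec d"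
  have "dist x y < e" using e rd by (simp add: y_def dist_norm)
  then have "y \<in> \<sigma>" using e by auto
  then have "rvec d \<bullet> y = 0" by (rule z)
  moreover have "rvec d \<bullet> x = 0" using z x interior_subset by blast
  ultimately have "(e/2) / norm (rvec d) * (rvec d \<bullet> rvec d) = 0"
    by (simp add: y_def inner_add_right)
  then show False using e rd by simp
qed

end

lemma int_min_exists:
  fixes X :: "int set"
  assumes "X \<noteq> {}" "\<forall>x\<in>X. b \<le> x"
  shows "\<exists>m\<in>X. \<forall>x\<in>X. m \<le> x"
proof -
  define P where "P n \<longleftrightarrow> (\<exists>x\<in>X. nat (x - b) = n)" for n
  have "\<exists>n. P n" using assms(1) by (auto simp: P_def)
  then obtain n where n: "P n" "\<forall>m<n. \<not> P m" using exists_least_iff[of P] by blast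
  then obtain x0 where x0: "x0 \<in> X" "nat (x0 - b) = n" by (auto simp: P_def)
  have "x0 \<le> x" if "x \<in> X" for x
  proof (rule ccontr)
    assume "\<not> x0 \<le> x"
    then have "nat (x - b) < n" using x0 assms(2) that by auto
    then show False using n(2) that by (auto simp: P_def)
  qed
  then show ?thesis using x0 by blast
qed

locale main_setup = cone_setup \<sigma> n c for \<sigma> :: "(real^'n::finite) set" and n c +
  fixes f :: "'n cpoly" and d e :: "int^'n" and q :: nat
  assumes hdiv: "Hpoly n c d dvd f" and dnz: "d \<noteq> 0" and dS: "- d \<in> semigp \<sigma>"
    and q: "q \<ge> 1" and eprim: "primitive_vec e" and dqe: "d = (\<chi> j. int q * e $ j)"
begin

lemma d_eq: "d = int q *s e"
  by (simp add: dqe vec_eq_iff)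

lemma rvec_d: "rvec d = real q *\<^sub>R rvec e"
  by (simp add: d_eq rvec_smult)

definition Zs where "Zs a = {k::int. a + k *s e \<in> Vmon f}"
definition fin where "fin a \<longleftrightarrow> Zs a \<noteq> {} \<and> bdd_below (Zs a)"
definition kmin where "kmin a = Inf (Zs a)"
definition kstar where "kstar a = Max {k \<in> Zs a. k < kmin a + int q}"
definition vpt where "vpt a = a + kstar a *s e"

lemma Zs_shift: "k \<in> Zs (a + m *s e) \<longleftrightarrow> k + m \<in> Zs a"
  by (simp add: Zs_def algebra_simps vector_sadd_rdistrib)

lemma tset_eq: "tset f d a = (\<lambda>k. real_of_int k / real q) ` Zs a"
proof (intro equalityI subsetI)
  fix t assume "t \<in> (\<lambda>k. real_of_int k / real q) ` Zs a"
  then obtain k where k: "k \<in> Zs a" "t = real_of_int k / real q" by blast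
  have "rvec (a + k *s e) = rvec a + t *\<^sub>R rvec d"
    using q by (simp add: k(2) rvec_d rvec_add rvec_smult)
  then show "t \<in> tset f d a" using k(1) unfolding tset_def Zs_def by blast
next
  fix t assume "t \<in> tset f d a"
  then obtain b where b: "b \<in> Vmon f" "rvec b = rvec a + t *\<^sub>R rvec d" unfolding tset_def by blast
  define r where "r = t * real q"
  have "rvec b = rvec a + r *\<^sub>R rvec e" using b(2) by (simp add: rvec_d r_def)
  then have bj: "real_of_int (b $ j) = real_of_int (a $ j) + r * real_of_int (e $ j)" for j
    by (simp add: rvec_def vec_eq_iff)
  have enz: "e \<noteq> 0" using eprim primitive_nz by blast
  then obtain j0 where j0: "e $ j0 \<noteq> 0" by (auto simp: vec_eq_iff)
  have "r = real_of_int (b $ j0 - a $ j0) / real_of_int (e $ j0)"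
    using bj[of j0] j0 by (simp add: field_simps)
  then have "r \<in> \<rat>" by simp
  then obtain p s where ps: "s > 0" "coprime p s" "r = of_int p / of_int s" by (rule Rats_cases')
  have "s dvd e $ j" for j
  proof -
    have "real_of_int (b $ j - a $ j) * real_of_int s = real_of_int p * real_of_int (e $ j)"
      using bj[of j] ps by (simp add: field_simps)
    then have "(b $ j - a $ j) * s = p * e $ j" by (metis of_int_eq_iff of_int_mult)
    then have "s dvd p * e $ j" by (metis dvd_triv_right)
    then show ?thesis using ps(2) by (metis coprime_commute coprime_dvd_mult_right_iff)
  qed
  then have "\<bar>s\<bar> = 1" using eprim unfolding primitive_vec_def by blast
  then have s1: "s = 1" using ps(1) by simp
  have "b = a + p *s e"
    using bj ps(3) s1 by (simp add: vec_eq_iff rvec_def) (metis of_int_eq_iff of_int_add of_int_mult)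
  then have "p \<in> Zs a" using b(1) by (simp add: Zs_def)
  moreover have "t = real_of_int p / real q" using ps(3) s1 q by (simp add: r_def[symmetric] field_simps)
  ultimately show "t \<in> (\<lambda>k. real_of_int k / real q) ` Zs a" by blast
qed

lemma kmin: assumes "fin a" shows "kmin a \<in> Zs a" "\<And>k. k \<in> Zs a \<Longrightarrow> kmin a \<le> k"
proof -
  obtain b where b: "\<forall>x\<in>Zs a. b \<le> x" using assms unfolding fin_def bdd_below_def by blast
  have ne: "Zs a \<noteq> {}" using assms unfolding fin_def by blast
  obtain m where m: "m \<in> Zs a" "\<forall>x\<in>Zs a. m \<le> x" using int_min_exists[OF ne b] by blast
  then have "kmin a = m" unfolding kmin_def by (intro cInf_eq_minimum) auto
  then show "kmin a \<in> Zs a" "\<And>k. k \<in> Zs a \<Longrightarrow> kmin a \<le> k" using m by auto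
qed

lemma kstar: assumes "fin a"
  shows "kstar a \<in> Zs a" "kmin a \<le> kstar a" "kstar a < kmin a + int q"
    "\<And>k. k \<in> Zs a \<Longrightarrow> k < kmin a + int q \<Longrightarrow> k \<le> kstar a"
proof -
  let ?A = "{k \<in> Zs a. k < kmin a + int q}"
  have A: "?A \<subseteq> {kmin a..<kmin a + int q}" using kmin[OF assms] by auto
  then have fA: "finite ?A" by (rule finite_subset) simp
  have ne: "kmin a \<in> ?A" using kmin[OF assms] q by auto
  have "kstar a \<in> ?A" unfolding kstar_def using fA ne by (intro Max_in) auto
  then show "kstar a \<in> Zs a" "kmin a \<le> kstar a" "kstar a < kmin a + int q" using A by auto
  show "\<And>k. k \<in> Zs a \<Longrightarrow> k < kmin a + int q \<Longrightarrow> k \<le> kstar a"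
    unfolding kstar_def using fA by (intro Max_ge) auto
qed

lemma val_fin: assumes "fin a" shows "val f d a = ereal (real_of_int (kmin a) / real q)"
  unfolding val_def tset_eq
proof (rule Inf_eqI)
  fix i assume "i \<in> ereal ` (\<lambda>k. real_of_int k / real q) ` Zs a"
  then obtain k where "k \<in> Zs a" "i = ereal (real_of_int k / real q)" by blast
  then show "ereal (real_of_int (kmin a) / real q) \<le> i"
    using kmin(2)[OF assms] q by (auto simp: divide_right_mono)
next
  fix y assume "\<And>i. i \<in> ereal ` (\<lambda>k. real_of_int k / real q) ` Zs a \<Longrightarrow> y \<le> i"
  then show "y \<le> ereal (real_of_int (kmin a) / real q)" using kmin(1)[OF assms] by blast
qed

lemma val_empty: assumes "Zs a = {}" shows "val f d a = \<infinity>"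
  unfolding val_def tset_eq assms by (simp add: top_ereal_def)

lemma val_unbdd: assumes "Zs a \<noteq> {}" "\<not> bdd_below (Zs a)" shows "val f d a = - \<infinity>"
  unfolding val_def tset_eq
proof (rule Inf_eqI)
  fix i assume "i \<in> ereal ` (\<lambda>k. real_of_int k / real q) ` Zs a"
  then show "- \<infinity> \<le> i" by simp
next
  fix y assume y: "\<And>i. i \<in> ereal ` (\<lambda>k. real_of_int k / real q) ` Zs a \<Longrightarrow> y \<le> i"
  show "y \<le> - \<infinity>"
  proof (cases y)
    case (real r)
    have "\<not> (\<forall>x\<in>Zs a. \<lfloor>r * real q\<rfloor> \<le> x)"
      using assms(2) unfolding bdd_below_def by blast
    then have "\<exists>k\<in>Zs a. k < \<lfloor>r * real q\<rfloor>" by (simp add: not_le)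
    then obtain k where k: "k \<in> Zs a" "k < \<lfloor>r * real q\<rfloor>" by blast
    then have "real_of_int k < r * real q" by linarith
    then have "real_of_int k / real q < r" using q by (simp add: divide_less_eq mult_ac)
    moreover have "y \<le> ereal (real_of_int k / real q)" using y k(1) by blast
    ultimately show ?thesis using real by simp
  next
    case PInf
    obtain k where "k \<in> Zs a" using assms(1) by blast
    then have "y \<le> ereal (real_of_int k / real q)" using y by blast
    then show ?thesis using PInf by simp
  qed simp
qed

lemma val_finite_iff: "\<bar>val f d a\<bar> \<noteq> \<infinity> \<longleftrightarrow> fin a"
proof (cases "Zs a = {}")
  case True then show ?thesis using val_empty by (simp add: fin_def)
next
  case False
  show ?thesis
  proof (cases "bdd_below (Zs a)")
    case True then show ?thesis using False val_fin by (simp add: fin_def)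
  next
    case b: False then show ?thesis using False val_unbdd by (simp add: fin_def)
  qed
qed

lemma val_gt_iff: "val f d a > - \<infinity> \<longleftrightarrow> Zs a = {} \<or> fin a"
proof (cases "Zs a = {}")
  case True then show ?thesis using val_empty by (simp add: fin_def)
next
  case False
  show ?thesis
  proof (cases "bdd_below (Zs a)")
    case True then show ?thesis using False val_fin by (simp add: fin_def)
  next
    case b: False then show ?thesis using False val_unbdd by (simp add: fin_def)
  qed
qed

lemma pval_eq: assumes "fin a" shows "pval f d a = real_of_int (kstar a) / real q"
proof -
  let ?A = "{k \<in> Zs a. kmin a \<le> k \<and> k < kmin a + int q}"
  have rv: "real_of_ereal (val f d a) = real_of_int (kmin a) / real q" using val_fin[OF assms] by simp
  have qp: "real q > 0" using q by simp
  have eq: "{t \<in> tset f d a. real_of_ereal (val f d a) \<le> t \<and> t < real_of_ereal (val f d a) + 1}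
        = (\<lambda>k. real_of_int k / real q) ` ?A"
  proof -
    have h1: "real_of_int (kmin a) / real q \<le> real_of_int k / real q \<longleftrightarrow> kmin a \<le> k" for k
      using qp by (simp add: divide_le_cancel)
    have h2: "real_of_int k / real q < real_of_int (kmin a) / real q + 1 \<longleftrightarrow> k < kmin a + int q" for k
    proof -
      have "real_of_int (kmin a) / real q + 1 = real_of_int (kmin a + int q) / real q"
        using qp by (simp add: field_simps)
      then have "real_of_int k / real q < real_of_int (kmin a) / real q + 1 \<longleftrightarrow>
           real_of_int k < real_of_int (kmin a + int q)"
        using qp by (simp only: divide_less_cancel) simp
      then show ?thesis by (simp only: of_int_less_iff)
    qed
    show ?thesis unfolding rv tset_eq using h1 h2 by auto
  qed
  have A: "?A \<subseteq> {kmin a..<kmin a + int q}" by auto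
  then have fA: "finite ?A" by (rule finite_subset) simp
  have ne: "?A \<noteq> {}" using kmin[OF assms] q by auto
  have mono: "mono (\<lambda>k. real_of_int k / real q)" using qp by (auto simp: mono_def divide_right_mono)
  have "?A = {k \<in> Zs a. k < kmin a + int q}" using kmin(2)[OF assms] by auto
  then have "Max ?A = kstar a" unfolding kstar_def by simp
  then show ?thesis unfolding pval_def eq using mono_Max_commute[OF mono fA ne] by simp
qed

lemma Vmon'_eq: "Vmon' f d = {vpt a | a. fin a}"
proof -
  have "rvec b = rvec a + pval f d a *\<^sub>R rvec d \<longleftrightarrow> b = vpt a" if "fin a" for a b
  proof -
    have "rvec a + pval f d a *\<^sub>R rvec d = rvec (vpt a)"
      using q by (simp add: pval_eq[OF that] rvec_d vpt_def rvec_add rvec_smult)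
    then show ?thesis by (simp add: rvec_inj)
  qed
  then show ?thesis unfolding Vmon'_def val_finite_iff by auto
qed

lemma fin_shift: "fin (a + m *s e) \<longleftrightarrow> fin a"
proof -
  have "Zs (a + m *s e) = (\<lambda>k. k - m) ` Zs a"
    by (auto simp: Zs_shift image_iff intro!: bexI[where x="_ + m"])
  moreover have "bdd_below ((\<lambda>k. k - m) ` X) \<longleftrightarrow> bdd_below X" for X :: "int set"
  proof
    assume "bdd_below ((\<lambda>k. k - m) ` X)"
    then obtain M where "\<forall>x\<in>X. M \<le> x - m" unfolding bdd_below_def by auto
    then have "\<forall>x\<in>X. M + m \<le> x" by auto
    then show "bdd_below X" unfolding bdd_below_def by blast
  next
    assume "bdd_below X"
    then obtain M where "\<forall>x\<in>X. M \<le> x" unfolding bdd_below_def by auto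
    then have "\<forall>y\<in>(\<lambda>k. k - m) ` X. M - m \<le> y" by auto
    then show "bdd_below ((\<lambda>k. k - m) ` X)" unfolding bdd_below_def by blast
  qed
  ultimately show ?thesis by (simp add: fin_def)
qed

lemma kmin_shift: assumes "fin a" shows "kmin (a + m *s e) = kmin a - m"
proof -
  have f: "fin (a + m *s e)" using fin_shift assms by blast
  have "kmin (a + m *s e) + m \<in> Zs a" using kmin(1)[OF f] Zs_shift by blast
  then have 1: "kmin a \<le> kmin (a + m *s e) + m" using kmin(2)[OF assms] by blast
  have "kmin a - m \<in> Zs (a + m *s e)" using kmin(1)[OF assms] Zs_shift by simp
  then have "kmin (a + m *s e) \<le> kmin a - m" using kmin(2)[OF f] by blast
  then show ?thesis using 1 by simp
qed

lemma kstar_shift: assumes "fin a" shows "kstar (a + m *s e) = kstar a - m"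
proof -
  have f: "fin (a + m *s e)" using fin_shift assms by blast
  have km: "kmin (a + m *s e) = kmin a - m" by (rule kmin_shift[OF assms])
  have "kstar (a + m *s e) + m \<in> Zs a" using kstar(1)[OF f] Zs_shift by blast
  moreover have "kstar (a + m *s e) + m < kmin a + int q" using kstar(3)[OF f] km by simp
  ultimately have 1: "kstar (a + m *s e) + m \<le> kstar a" using kstar(4)[OF assms] by blast
  have "kstar a - m \<in> Zs (a + m *s e)" using kstar(1)[OF assms] Zs_shift by simp
  moreover have "kstar a - m < kmin (a + m *s e) + int q" using kstar(3)[OF assms] km by simp
  ultimately have "kstar a - m \<le> kstar (a + m *s e)" using kstar(4)[OF f] by blast
  then show ?thesis using 1 by simp
qed

lemma vpt_shift: assumes "fin a" shows "vpt (a + m *s e) = vpt a"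
  by (simp add: vpt_def kstar_shift[OF assms] vec_eq_iff algebra_simps)

end

section \<open>Monomial ideals as exponent sets\<close>

definition PE :: "(int^'n) set \<Rightarrow> 'n elt set" where
  "PE E = {p. Poly_Mapping.keys p \<subseteq> E}"

definition upw :: "(real^'n) set \<Rightarrow> (int^'n) set \<Rightarrow> bool" where
  "upw \<sigma> E \<longleftrightarrow> E \<subseteq> semigp \<sigma> \<and> (\<forall>x\<in>E. \<forall>s\<in>semigp \<sigma>. x + s \<in> E)"

lemma keys_monom[simp]: "Poly_Mapping.keys (monom a) = {a}"
  by (simp add: monom_def)

lemma monom_nz[simp]: "monom a \<noteq> 0"
proof
  assume "monom a = 0"
  then have "Poly_Mapping.keys (monom a) = {}" by simp
  then show False by simp
qed

lemma is_ideal_PE: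
  assumes "upw \<sigma> E" shows "is_ideal \<sigma> (PE E)"
  unfolding is_ideal_def
proof (intro conjI ballI)
  show "PE E \<subseteq> ringR \<sigma>" using assms by (auto simp: PE_def ringR_def upw_def)
  show "0 \<in> PE E" by (simp add: PE_def)
  fix x y assume "x \<in> PE E" "y \<in> PE E"
  then show "x + y \<in> PE E" unfolding PE_def using keys_add[of x y] by auto
next
  fix r x assume r: "r \<in> ringR \<sigma>" and x: "x \<in> PE E"
  have "Poly_Mapping.keys (r * x) \<subseteq> E"
  proof
    fix k assume "k \<in> Poly_Mapping.keys (r * x)"
    then obtain a b where "k = a + b" "a \<in> Poly_Mapping.keys r" "b \<in> Poly_Mapping.keys x"
      using keys_mult[of r x] by blast
    moreover have "b \<in> E" "a \<in> semigp \<sigma>" using r x calculation by (auto simp: ringR_def PE_def)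
    ultimately have "b + a \<in> E" using assms by (auto simp: upw_def)
    then show "k \<in> E" using \<open>k = a + b\<close> by (simp add: add.commute)
  qed
  then show "r * x \<in> PE E" by (simp add: PE_def)
qed

definition msum :: "(int^'n) set \<Rightarrow> (real^'n) set \<Rightarrow> (int^'n) set" where
  "msum X \<sigma> = {x + s | x s. x \<in> X \<and> s \<in> semigp \<sigma>}"

lemma upw_msum: "X \<subseteq> semigp \<sigma> \<Longrightarrow> upw \<sigma> (msum X \<sigma>)"
  unfolding upw_def msum_def
  by (auto intro: semigp_add) (metis add.assoc semigp_add)

lemma ideal_sum_mem:
  assumes "is_ideal \<sigma> J" "\<And>x. x \<in> A \<Longrightarrow> F x \<in> J"
  shows "sum F A \<in> J"
  using assms(2)
proof (induction A rule: infinite_finite_induct)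
  case (infinite A) then show ?case using assms(1) by (simp add: is_ideal_def)
next
  case empty then show ?case using assms(1) by (simp add: is_ideal_def)
next
  case (insert x F) then show ?case using assms(1) by (simp add: is_ideal_def)
qed

lemma ideal_gen_monom:
  assumes "X \<subseteq> semigp \<sigma>"
  shows "ideal_gen \<sigma> (monom ` X) = PE (msum X \<sigma>)"
proof (intro equalityI)
  have "is_ideal \<sigma> (PE (msum X \<sigma>))" using is_ideal_PE upw_msum assms by blast
  moreover have "monom ` X \<subseteq> PE (msum X \<sigma>)"
  proof
    fix y assume "y \<in> monom ` X"
    then obtain x where x: "x \<in> X" "y = monom x" by blast
    have "x \<in> msum X \<sigma>" unfolding msum_def
      using x(1) by (intro CollectI exI[of _ x] exI[of _ 0]) simp
    then show "y \<in> PE (msum X \<sigma>)" using x by (simp add: PE_def)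
  qed
  ultimately show "ideal_gen \<sigma> (monom ` X) \<subseteq> PE (msum X \<sigma>)"
    unfolding ideal_gen_def by blast
next
  show "PE (msum X \<sigma>) \<subseteq> ideal_gen \<sigma> (monom ` X)"
    unfolding ideal_gen_def
  proof (intro subsetI InterI, clarify)
    fix p J assume p: "p \<in> PE (msum X \<sigma>)" and J: "is_ideal \<sigma> J" "monom ` X \<subseteq> J"
    have "Poly_Mapping.single k (Poly_Mapping.lookup p k) \<in> J" if k: "k \<in> Poly_Mapping.keys p" for k
    proof -
      obtain x s where xs: "k = x + s" "x \<in> X" "s \<in> semigp \<sigma>" using p k by (auto simp: PE_def msum_def)
      have "Poly_Mapping.single s (Poly_Mapping.lookup p k) \<in> ringR \<sigma>"
        using xs by (auto simp: ringR_def)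
      moreover have "monom x \<in> J" using J xs by auto
      ultimately have "Poly_Mapping.single s (Poly_Mapping.lookup p k) * monom x \<in> J"
        using J(1) by (simp add: is_ideal_def)
      then show ?thesis by (simp add: monom_def mult_single xs add.commute)
    qed
    then have "(\<Sum>k\<in>Poly_Mapping.keys p. Poly_Mapping.single k (Poly_Mapping.lookup p k)) \<in> J"
      by (intro ideal_sum_mem[OF J(1)])
    then show "p \<in> J" using pm_expand[of p] by simp
  qed
qed

lemma monom_PE: "monom a \<in> PE E \<longleftrightarrow> a \<in> E"
  by (simp add: PE_def)

lemma Exps_PE: "E \<subseteq> semigp \<sigma> \<Longrightarrow> Exps \<sigma> (PE E) = E"
  unfolding Exps_def monom_PE by auto

lemma PE_inj: "PE E1 = PE E2 \<Longrightarrow> E1 = E2"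
  by (metis monom_PE subsetI subset_antisym)

lemma PE_zero: "PE E = {0} \<longleftrightarrow> E = {}"
proof
  assume "PE E = {0}"
  then show "E = {}" by (metis monom_PE monom_nz singletonD equals0I)
qed (auto simp: PE_def)

lemma msum_self: "upw \<sigma> E \<Longrightarrow> msum E \<sigma> = E"
  unfolding msum_def upw_def by (auto, metis add.right_neutral semigp_zero)

lemma monomial_ideal_PE:
  assumes "monomial_ideal \<sigma> I"
  shows "upw \<sigma> (Exps \<sigma> I)" "I = PE (Exps \<sigma> I)"
proof -
  have id: "is_ideal \<sigma> I" using assms by (simp add: monomial_ideal_def)
  have X: "{monom a | a. monom a \<in> I} = monom ` Exps \<sigma> I"
    using id by (auto simp: Exps_def is_ideal_def ringR_def)
  have XS: "Exps \<sigma> I \<subseteq> semigp \<sigma>" by (auto simp: Exps_def)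
  have "x + s \<in> Exps \<sigma> I" if "x \<in> Exps \<sigma> I" "s \<in> semigp \<sigma>" for x s
  proof -
    have "monom s * monom x \<in> I" "x + s \<in> semigp \<sigma>"
      using id that by (auto simp: is_ideal_def Exps_def ringR_def intro: semigp_add)
    then show "x + s \<in> Exps \<sigma> I" by (simp add: Exps_def monom_def mult_single add.commute)
  qed
  then show up: "upw \<sigma> (Exps \<sigma> I)" using XS unfolding upw_def by blast
  have "I = ideal_gen \<sigma> (monom ` Exps \<sigma> I)" using assms X by (simp add: monomial_ideal_def)
  also have "\<dots> = PE (Exps \<sigma> I)" using ideal_gen_monom[OF XS] msum_self[OF up] by simp
  finally show "I = PE (Exps \<sigma> I)" .
qed

lemma lookup_delta: "Poly_Mapping.lookup (delta f d p) k = Poly_Mapping.lookup p (k - d) * peval f (k - d)"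
proof -
  have "Poly_Mapping.lookup (delta f d p) k =
     (\<Sum>a\<in>Poly_Mapping.keys p. if a = k - d then Poly_Mapping.lookup p a * peval f a else 0)"
    unfolding delta_def lookup_sum by (intro sum.cong) (auto simp: lookup_single when_def)
  also have "\<dots> = Poly_Mapping.lookup p (k - d) * peval f (k - d)"
    by (simp add: sum.delta' in_keys_iff)
  finally show ?thesis .
qed

lemma delta_PE: "delta f d ` PE E = PE {a + d | a. a \<in> E \<and> peval f a \<noteq> 0}"
proof (intro equalityI subsetI)
  fix x assume "x \<in> delta f d ` PE E"
  then obtain p where p: "p \<in> PE E" "x = delta f d p" by blast
  have "k \<in> {a + d | a. a \<in> E \<and> peval f a \<noteq> 0}" if "k \<in> Poly_Mapping.keys x" for k
  proof -
    have "Poly_Mapping.lookup p (k - d) \<noteq> 0" "peval f (k - d) \<noteq> 0"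
      using p(2) that by (auto simp: in_keys_iff lookup_delta)
    then have "k - d \<in> E" "peval f (k - d) \<noteq> 0" using p(1) by (auto simp: PE_def in_keys_iff)
    then show ?thesis by (intro CollectI exI[of _ "k - d"]) simp
  qed
  then show "x \<in> PE {a + d | a. a \<in> E \<and> peval f a \<noteq> 0}" unfolding PE_def by blast
next
  fix x assume x: "x \<in> PE {a + d | a. a \<in> E \<and> peval f a \<noteq> 0}"
  define r where "r = (\<Sum>b\<in>Poly_Mapping.keys x. Poly_Mapping.single (b - d) (Poly_Mapping.lookup x b / peval f (b - d)))"
  have lr: "Poly_Mapping.lookup r y = (if y + d \<in> Poly_Mapping.keys x then Poly_Mapping.lookup x (y + d) / peval f y else 0)" for y
  proof -
    have "Poly_Mapping.lookup r y = (\<Sum>b\<in>Poly_Mapping.keys x. if b = y + d then Poly_Mapping.lookup x b / peval f (b - d) else 0)"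
      unfolding r_def lookup_sum by (intro sum.cong) (auto simp: lookup_single when_def)
    also have "\<dots> = (if y + d \<in> Poly_Mapping.keys x then Poly_Mapping.lookup x (y + d) / peval f y else 0)"
      by (simp add: sum.delta')
    finally show ?thesis .
  qed
  have "r \<in> PE E"
    unfolding PE_def mem_Collect_eq
  proof
    fix y assume "y \<in> Poly_Mapping.keys r"
    then have "y + d \<in> Poly_Mapping.keys x" by (auto simp: in_keys_iff lr split: if_splits)
    then show "y \<in> E" using x by (auto simp: PE_def)
  qed
  moreover have "delta f d r = x"
  proof (rule poly_mapping_eqI)
    fix k
    show "Poly_Mapping.lookup (delta f d r) k = Poly_Mapping.lookup x k"
    proof (cases "k \<in> Poly_Mapping.keys x")
      case True
      then have "peval f (k - d) \<noteq> 0" using x by (auto simp: PE_def)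
      then show ?thesis using True by (simp add: lookup_delta lr)
    next
      case False
      then show ?thesis by (simp add: lookup_delta lr in_keys_iff)
    qed
  qed
  ultimately show "x \<in> delta f d ` PE E" by blast
qed

context main_setup
begin

lemma hint_d: "hint (c i) d = int q * hint (c i) e"
  by (simp add: d_eq hint_smult)

lemma qpos: "int q > 0" using q by simp

lemma me_S: "- e \<in> semigp \<sigma>"
proof -
  have "hint (c i) (- e) \<ge> 0" if "i < n" for i
  proof -
    have "hint (c i) (- d) \<ge> 0" using dS that S_iff by blast
    then have "int q * hint (c i) (- e) \<ge> 0" by (simp add: hint_minus hint_d)
    then show ?thesis using qpos by (simp add: zero_le_mult_iff)
  qed
  then show ?thesis by (simp add: S_iff)
qed

lemma jme_S: "0 \<le> j \<Longrightarrow> (- j) *s e \<in> semigp \<sigma>"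
proof -
  assume "0 \<le> j"
  moreover have "(- j) *s e = j *s (- e)" by (simp add: vec_eq_iff)
  ultimately show ?thesis using semigp_smult[OF me_S, of j] by simp
qed

lemma hint_e_le: "i < n \<Longrightarrow> hint (c i) e \<le> 0"
proof -
  assume "i < n"
  then have "0 \<le> hint (c i) (- e)" using me_S S_iff by blast
  then show ?thesis by (simp add: hint_minus)
qed

lemma H_zero:
  assumes "i < n" "0 \<le> hint (c i) p" "hint (c i) p \<le> int q * hint (c i) (- e) - 1"
  shows "p \<in> Vmon f"
proof -
  have "peval (Hpoly n c d) p = 0"
    using assms by (intro peval_Hpoly_zero[OF assms(1)]) (auto simp: hint_minus hint_d)
  then show ?thesis using peval_dvd[OF hdiv] by (simp add: Vmon_def)
qed

lemma facet_pos: "\<exists>i0<n. hint (c i0) (- e) > 0"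
proof -
  obtain i where i: "i < n" "hint (c i) d < 0" using d_facet[OF dnz dS] by blast
  then have "int q * hint (c i) e < 0" by (simp add: hint_d)
  then have "hint (c i) e < 0" using qpos by (simp add: mult_less_0_iff)
  then show ?thesis using i by (auto simp: hint_minus)
qed

lemma hint_line: "hint (c i) (a + k *s e) = hint (c i) a - k * hint (c i) (- e)"
  by (simp add: hint_add hint_smult hint_minus)

lemma Zs_ne: "Zs a \<noteq> {}"
proof -
  obtain i0 where i0: "i0 < n" "hint (c i0) (- e) > 0" using facet_pos by blast
  define h where "h = hint (c i0) (- e)"
  define k where "k = hint (c i0) a div h"
  have "hint (c i0) (a + k *s e) = hint (c i0) a mod h"
    unfolding hint_line h_def[symmetric] k_def by (simp add: minus_div_mult_eq_mod)
  moreover have "0 \<le> hint (c i0) a mod h" "hint (c i0) a mod h < h" using i0 h_def by auto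
  moreover have "h \<le> int q * h" using q i0 h_def by simp
  ultimately have "0 \<le> hint (c i0) (a + k *s e)" "hint (c i0) (a + k *s e) \<le> int q * hint (c i0) (- e) - 1"
    unfolding h_def by linarith+
  then have "a + k *s e \<in> Vmon f" by (rule H_zero[OF i0(1)])
  then show ?thesis by (auto simp: Zs_def)
qed

lemma vpt_S:
  assumes aS: "a \<in> semigp \<sigma>" and fa: "fin a"
  shows "vpt a \<in> semigp \<sigma>"
  unfolding S_iff
proof (intro allI impI)
  fix i assume i: "i < n"
  define h where "h = hint (c i) (- e)"
  have h0: "h \<ge> 0" using hint_e_le[OF i] by (simp add: h_def hint_minus)
  show "0 \<le> hint (c i) (vpt a)"
  proof (cases "h = 0")
    case True
    then show ?thesis using aS i S_iff by (simp add: vpt_def hint_line h_def[symmetric])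
  next
    case False
    then have hp: "h > 0" using h0 by simp
    show ?thesis
    proof (rule ccontr)
      define v where "v = hint (c i) (vpt a)"
      assume "\<not> 0 \<le> hint (c i) (vpt a)"
      then have v: "v < 0" by (simp add: v_def)
      define m where "m = (h - 1 - v) div h"
      define r where "r = (h - 1 - v) mod h"
      have mr: "h - 1 - v = m * h + r" "0 \<le> r" "r < h" using hp by (auto simp: m_def r_def)
      have m1: "m \<ge> 1"
      proof (rule ccontr)
        assume "\<not> m \<ge> 1"
        then have "m * h \<le> 0" using hp by (simp add: mult_nonpos_nonneg)
        then show False using mr v by linarith
      qed
      define k where "k = kstar a - m - (int q - 1)"
      have e1: "hint (c i) (a + k *s e) = hint (c i) a - k * h" by (simp only: hint_line h_def)
      have e2: "v = hint (c i) a - kstar a * h" by (simp only: v_def vpt_def hint_line h_def)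
      have A: "hint (c i) (a + k *s e) = v + (m + (int q - 1)) * h"
        unfolding e1 e2 by (simp add: k_def algebra_simps)
      have B: "v + m * h = h - 1 - r" using mr by simp
      have hv: "hint (c i) (a + k *s e) = h - 1 - r + (int q - 1) * h"
        using A B distrib_right[of m "int q - 1" h] by linarith
      have "0 \<le> hint (c i) (a + k *s e)" using hv mr q hp by simp
      moreover have "hint (c i) (a + k *s e) \<le> int q * h - 1" using hv mr by (simp add: algebra_simps)
      ultimately have "k \<in> Zs a" using H_zero[OF i, of "a + k *s e"] by (simp add: Zs_def h_def)
      then have "kmin a \<le> k" using kmin(2)[OF fa] by blast
      moreover have "kstar a < kmin a + int q" using kstar(3)[OF fa] .
      ultimately show False using m1 by (simp add: k_def)
    qed
  qed
qed

end

lemma int_max_exists: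
  fixes X :: "int set"
  assumes "X \<noteq> {}" "\<forall>x\<in>X. x \<le> b"
  shows "\<exists>m\<in>X. \<forall>x\<in>X. x \<le> m"
proof -
  have h1: "uminus ` X \<noteq> {}" using assms by blast
  have h2: "\<forall>x\<in>uminus ` X. - b \<le> x" using assms by auto
  obtain m where m: "m \<in> uminus ` X" "\<forall>x\<in>uminus ` X. m \<le> x" using int_min_exists[OF h1 h2] by blast
  have "- m \<in> X" using m(1) by auto
  moreover have "x \<le> - m" if "x \<in> X" for x
  proof -
    have "- x \<in> uminus ` X" using that by blast
    then have "m \<le> - x" using m(2) by blast
    then show ?thesis by simp
  qed
  ultimately show ?thesis by blast
qed

context main_setup
begin

definition Ep :: "(int^'n) set \<Rightarrow> (int^'n) set" where
  "Ep E = {a + d | a. a \<in> E \<and> peval f a \<noteq> 0}"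

lemma Ep_iff: "x \<in> Ep E \<longleftrightarrow> x - d \<in> E \<and> x - d \<notin> Vmon f"
  unfolding Ep_def Vmon_def mem_Collect_eq
proof
  assume "\<exists>a. x = a + d \<and> a \<in> E \<and> peval f a \<noteq> 0"
  then obtain a where "x = a + d" "a \<in> E" "peval f a \<noteq> 0" by blast
  then show "x - d \<in> E \<and> peval f (x - d) \<noteq> 0" by simp
next
  assume "x - d \<in> E \<and> peval f (x - d) \<noteq> 0"
  then show "\<exists>a. x = a + d \<and> a \<in> E \<and> peval f a \<noteq> 0" by (intro exI[of _ "x - d"]) simp
qed

lemma vpt_line: "\<exists>k. vpt a = a + k *s e"
  unfolding vpt_def by blast

lemma vpt_idem: assumes "fin a" shows "vpt (vpt a) = vpt a"
proof -
  have "vpt (a + kstar a *s e) = vpt a" by (rule vpt_shift[OF assms])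
  then show ?thesis unfolding vpt_def[of a] .
qed

lemma fin_vpt: "fin a \<Longrightarrow> fin (vpt a)"
  by (simp add: vpt_def fin_shift)

lemma hint_e0: "hint (c i) d = 0 \<longleftrightarrow> hint (c i) e = 0"
  using qpos by (simp add: hint_d)

lemma line_add: "a + j *s e + k *s e = a + (j + k) *s e"
  by (simp add: vec_eq_iff algebra_simps)

section \<open>From a fixed monomial ideal to B\<close>

context
  fixes E assumes up: "upw \<sigma> E" and fx: "Ep E = E"
begin

lemma ES: "E \<subseteq> semigp \<sigma>" using up by (simp add: upw_def)

lemma E_down: "a \<in> E \<Longrightarrow> 0 \<le> j \<Longrightarrow> a + (- j) *s e \<in> E"
proof -
  assume "a \<in> E" "0 \<le> j"
  moreover have "(- j) *s e \<in> semigp \<sigma>" using jme_S \<open>0 \<le> j\<close> by blast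
  ultimately show ?thesis using up unfolding upw_def by blast
qed

lemma fixE: "a \<in> E \<longleftrightarrow> a - d \<in> E \<and> a - d \<notin> Vmon f"
  using fx Ep_iff by blast

lemma top_exists:
  assumes "x + m *s e \<in> E"
  shows "\<exists>K. x + K *s e \<in> E \<and> (\<forall>k. x + k *s e \<in> E \<longrightarrow> k \<le> K)"
proof -
  obtain i0 where i0: "i0 < n" "hint (c i0) (- e) > 0" using facet_pos by blast
  have bnd: "k \<le> \<bar>hint (c i0) x\<bar>" if "x + k *s e \<in> E" for k
  proof -
    have "0 \<le> hint (c i0) (x + k *s e)" using that ES S_iff i0(1) by blast
    then have "k * hint (c i0) (- e) \<le> hint (c i0) x" by (simp add: hint_line)
    moreover have "k * 1 \<le> k * hint (c i0) (- e)" if "k \<ge> 0" using i0(2) that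
      by (intro mult_left_mono) auto
    ultimately show ?thesis by (cases "k \<ge> 0") auto
  qed
  have "{k. x + k *s e \<in> E} \<noteq> {}" using assms by blast
  then obtain K where "K \<in> {k. x + k *s e \<in> E}" "\<forall>k\<in>{k. x + k *s e \<in> E}. k \<le> K"
    using int_max_exists[of "{k. x + k *s e \<in> E}" "\<bar>hint (c i0) x\<bar>"] bnd by blast
  then show ?thesis by blast
qed

lemma top_props:
  assumes "a \<in> E" "a + e \<notin> E"
  shows "fin a" "vpt a = a" "\<And>j. 0 \<le> j \<Longrightarrow> j < int q \<Longrightarrow> a + (- j) *s e \<in> Vmon f"
proof -
  have inV: "a + (- j) *s e \<in> Vmon f" if "0 \<le> j" "j < int q" for j
  proof (rule ccontr)
    assume nv: "a + (- j) *s e \<notin> Vmon f"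
    have inE: "a + (- j) *s e \<in> E" using E_down assms(1) that by blast
    define b where "b = a + (- j) *s e + d"
    have bE: "b \<in> E" using fixE[of b] inE nv by (simp add: b_def)
    have "a + e = b + (- (int q - j - 1)) *s e"
      by (simp add: b_def d_eq vec_eq_iff algebra_simps)
    moreover have "int q - j - 1 \<ge> 0" using that by simp
    then have "b + (- (int q - j - 1)) *s e \<in> E" by (rule E_down[OF bE])
    ultimately have "a + e \<in> E" by (simp only:)
    then show False using assms(2) by simp
  qed
  have notV: "a + k *s e \<notin> Vmon f" if "k \<le> - int q" for k
  proof -
    have "0 \<le> - (k + int q)" using that by simp
    then have "a + (- (- (k + int q))) *s e \<in> E" by (rule E_down[OF assms(1)])
    then have "a + (k + int q) *s e \<in> E" by (simp only: minus_minus)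
    then have "(a + (k + int q) *s e) - d \<notin> Vmon f" using fixE by blast
    moreover have "(a + (k + int q) *s e) - d = a + k *s e" by (simp add: d_eq vec_eq_iff algebra_simps)
    ultimately show ?thesis by simp
  qed
  have Z1: "k \<in> Zs a" if "1 - int q \<le> k" "k \<le> 0" for k
    using inV[of "- k"] that by (simp add: Zs_def)
  have Z2: "1 - int q \<le> k" if "k \<in> Zs a" for k
  proof (rule ccontr)
    assume "\<not> 1 - int q \<le> k"
    then have "k \<le> - int q" by simp
    then show False using notV that by (simp add: Zs_def)
  qed
  have "0 \<in> Zs a" using Z1[of 0] q by simp
  moreover have "bdd_below (Zs a)" using Z2 by (intro bdd_belowI[of _ "1 - int q"])
  ultimately show fa: "fin a" unfolding fin_def by blast
  have "kmin a \<le> 1 - int q" using kmin(2)[OF fa] Z1[of "1 - int q"] q by simp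
  moreover have "1 - int q \<le> kmin a" using Z2 kmin(1)[OF fa] by blast
  ultimately have km: "kmin a = 1 - int q" by simp
  have "kstar a \<le> 0" using kstar(3)[OF fa] km by simp
  moreover have "0 \<le> kstar a" using kstar(4)[OF fa, of 0] Z1[of 0] km q by simp
  ultimately have "kstar a = 0" by simp
  then show "vpt a = a" by (simp add: vpt_def)
  show "\<And>j. 0 \<le> j \<Longrightarrow> j < int q \<Longrightarrow> a + (- j) *s e \<in> Vmon f" by (rule inV)
qed


lemma top_of:
  assumes "x + m *s e \<in> E"
  shows "fin x" "vpt x \<in> E" "vpt x + e \<notin> E"
    "\<And>j. 0 \<le> j \<Longrightarrow> j < int q \<Longrightarrow> vpt x + (- j) *s e \<in> Vmon f"
proof -
  obtain K where K: "x + K *s e \<in> E" "\<forall>k. x + k *s e \<in> E \<longrightarrow> k \<le> K"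
    using top_exists[OF assms] by blast
  define a where "a = x + K *s e"
  have ae: "a + e \<notin> E"
  proof
    assume ae: "a + e \<in> E"
    have eq: "a + e = x + (K + 1) *s e" by (simp add: a_def vec_eq_iff algebra_simps)
    have "x + (K + 1) *s e \<in> E" unfolding eq[symmetric] by (rule ae)
    then have "K + 1 \<le> K" using K(2) by blast
    then show False by simp
  qed
  have aE: "a \<in> E" using K(1) by (simp add: a_def)
  note tp = top_props[OF aE ae]
  have xa: "x = a + (- K) *s e" by (simp add: a_def vec_eq_iff)
  show fx: "fin x" using tp(1) fin_shift xa by metis
  have "vpt x = a" using vpt_shift[OF tp(1), of "- K"] xa tp(2) by simp
  then show "vpt x \<in> E" "vpt x + e \<notin> E" "\<And>j. 0 \<le> j \<Longrightarrow> j < int q \<Longrightarrow> vpt x + (- j) *s e \<in> Vmon f"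
    using aE ae tp(3) by auto
qed

definition betaf :: "int^'n \<Rightarrow> nat \<Rightarrow> nat" where
  "betaf a i = (if i < n \<and> hint (c i) d = 0 then nat (hint (c i) a) else 0)"

lemma W_eq: "Wset \<sigma> n c (betaf ` E) = {x \<in> semigp \<sigma>. \<exists>m. x + m *s e \<in> E}"
proof (intro equalityI subsetI)
  fix x assume "x \<in> Wset \<sigma> n c (betaf ` E)"
  then obtain a where a: "a \<in> E" "x \<in> semigp \<sigma>" "\<forall>i<n. hint (c i) x \<ge> int (betaf a i)"
    unfolding Wset_def by blast
  have aS: "a \<in> semigp \<sigma>" using a(1) ES by blast
  define j where "j = (\<Sum>i<n. \<bar>hint (c i) (x - a)\<bar>)"
  have j0: "0 \<le> j" by (simp add: j_def sum_nonneg)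
  define z where "z = x + (- j) *s e"
  have "z - a \<in> semigp \<sigma>"
    unfolding S_iff
  proof (intro allI impI)
    fix i assume i: "i < n"
    have hz: "hint (c i) (z - a) = hint (c i) (x - a) + j * hint (c i) (- e)"
      by (simp add: z_def hint_diff hint_add hint_smult hint_minus)
    show "0 \<le> hint (c i) (z - a)"
    proof (cases "hint (c i) d = 0")
      case True
      then have "hint (c i) e = 0" using hint_e0 by blast
      moreover have "hint (c i) x \<ge> hint (c i) a"
        using a(3)[rule_format, OF i] i True facet_nonneg[OF facets i aS] by (simp add: betaf_def)
      ultimately show ?thesis using hz by (simp add: hint_diff hint_minus)
    next
      case False
      then have "hint (c i) e \<noteq> 0" using hint_e0 by blast
      then have h1: "hint (c i) (- e) \<ge> 1" using hint_e_le[OF i] by (simp add: hint_minus)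
      have "\<bar>hint (c i) (x - a)\<bar> \<le> j" unfolding j_def using i
        by (intro member_le_sum) auto
      moreover have "j * 1 \<le> j * hint (c i) (- e)" using h1 j0 by (intro mult_left_mono) auto
      ultimately show ?thesis using hz by linarith
    qed
  qed
  then have "a + (z - a) \<in> E" using up a(1) unfolding upw_def by blast
  then have "x + (- j) *s e \<in> E" by (simp add: z_def)
  then show "x \<in> {x \<in> semigp \<sigma>. \<exists>m. x + m *s e \<in> E}" using a(2) by blast
next
  fix x assume "x \<in> {x \<in> semigp \<sigma>. \<exists>m. x + m *s e \<in> E}"
  then obtain m where x: "x \<in> semigp \<sigma>" "x + m *s e \<in> E" by blast
  have "int (betaf (x + m *s e) i) \<le> hint (c i) x" if i: "i < n" for i
  proof (cases "hint (c i) d = 0")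
    case True
    then have "hint (c i) e = 0" using hint_e0 by blast
    then have "hint (c i) (x + m *s e) = hint (c i) x" by (simp add: hint_add hint_smult)
    then show ?thesis using True i facet_nonneg[OF facets i x(1)] by (simp add: betaf_def)
  next
    case False
    then show ?thesis using facet_nonneg[OF facets i x(1)] by (simp add: betaf_def)
  qed
  then show "x \<in> Wset \<sigma> n c (betaf ` E)" unfolding Wset_def using x by blast
qed

lemma lhs_to_rhs:
  assumes ne: "E \<noteq> {}"
  shows "\<exists>B. B \<noteq> {} \<and> compatible n c d B
          \<and> (\<forall>a\<in>Wset \<sigma> n c B. val f d a > -\<infinity>)
          \<and> (\<forall>a\<in>Vmon' f d \<inter> Wset \<sigma> n c B. \<forall>i<q. a - of_int (int i) *s e \<in> Vmon f)
          \<and> (\<forall>a\<in>Vmon' f d \<inter> Wset \<sigma> n c B. \<forall>b\<in>Vmon' f d \<inter> Wset \<sigma> n c B.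
                a - b \<notin> (\<lambda>s. s - e) ` semigp \<sigma>)"
proof -
  have c0: "betaf ` E \<noteq> {}" using ne by simp
  have c1: "compatible n c d (betaf ` E)" unfolding compatible_def betaf_def by simp
  have c2: "\<forall>a\<in>Wset \<sigma> n c (betaf ` E). val f d a > -\<infinity>"
  proof
    fix a assume "a \<in> Wset \<sigma> n c (betaf ` E)"
    then have "a \<in> {x \<in> semigp \<sigma>. \<exists>m. x + m *s e \<in> E}" unfolding W_eq .
    then obtain m where "a + m *s e \<in> E" by blast
    then have "fin a" by (rule top_of(1))
    then show "val f d a > - \<infinity>" using val_gt_iff by blast
  qed
  have vp: "vpt b = b" "\<exists>m. b + m *s e \<in> E" if "b \<in> Vmon' f d \<inter> Wset \<sigma> n c (betaf ` E)" for b
  proof -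
    have "b \<in> {vpt a | a. fin a}" using that unfolding Vmon'_eq by blast
    then obtain y where y: "fin y" "b = vpt y" by blast
    show "vpt b = b" using vpt_idem[OF y(1)] y(2) by simp
    have "b \<in> {x \<in> semigp \<sigma>. \<exists>m. x + m *s e \<in> E}" using that unfolding W_eq by blast
    then show "\<exists>m. b + m *s e \<in> E" by blast
  qed
  have c3: "\<forall>a\<in>Vmon' f d \<inter> Wset \<sigma> n c (betaf ` E). \<forall>i<q. a - of_int (int i) *s e \<in> Vmon f"
  proof (intro ballI allI impI)
    fix a i assume a: "a \<in> Vmon' f d \<inter> Wset \<sigma> n c (betaf ` E)" and i: "i < q"
    obtain m where m: "a + m *s e \<in> E" using vp(2)[OF a] by blast
    have "vpt a + (- int i) *s e \<in> Vmon f" using top_of(4)[OF m, of "int i"] i by simp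
    moreover have "vpt a + (- int i) *s e = a - of_int (int i) *s e" using vp(1)[OF a] by (simp add: vec_eq_iff)
    ultimately show "a - of_int (int i) *s e \<in> Vmon f" by simp
  qed
  have c4: "\<forall>a\<in>Vmon' f d \<inter> Wset \<sigma> n c (betaf ` E). \<forall>b\<in>Vmon' f d \<inter> Wset \<sigma> n c (betaf ` E).
                a - b \<notin> (\<lambda>s. s - e) ` semigp \<sigma>"
  proof (intro ballI)
    fix a b assume a: "a \<in> Vmon' f d \<inter> Wset \<sigma> n c (betaf ` E)" and b: "b \<in> Vmon' f d \<inter> Wset \<sigma> n c (betaf ` E)"
    show "a - b \<notin> (\<lambda>s. s - e) ` semigp \<sigma>"
    proof
      assume "a - b \<in> (\<lambda>s. s - e) ` semigp \<sigma>"
      then obtain s where s: "s \<in> semigp \<sigma>" "a - b = s - e" by blast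
      obtain ma where ma: "a + ma *s e \<in> E" using vp(2)[OF a] by blast
      obtain mb where mb: "b + mb *s e \<in> E" using vp(2)[OF b] by blast
      have "b \<in> E" using top_of(2)[OF mb] vp(1)[OF b] by simp
      then have "b + s \<in> E" using up s(1) unfolding upw_def by blast
      moreover have "b + s = a + e" using s(2) by (simp add: algebra_simps)
      ultimately have "vpt a + e \<in> E" using vp(1)[OF a] by simp
      then show False using top_of(3)[OF ma] by simp
    qed
  qed
  show ?thesis
    by (rule exI[of _ "betaf ` E"]) (intro conjI c0 c1 c2 c3 c4)
qed

end
end

context main_setup
begin

context
  fixes B :: "(nat \<Rightarrow> nat) set"
  assumes cB: "compatible n c d B"
    and c1: "\<forall>a\<in>Wset \<sigma> n c B. val f d a > -\<infinity>"
    and c2: "\<forall>a\<in>Vmon' f d \<inter> Wset \<sigma> n c B. \<forall>i<q. a - of_int (int i) *s e \<in> Vmon f"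
    and c3: "\<forall>a\<in>Vmon' f d \<inter> Wset \<sigma> n c B. \<forall>b\<in>Vmon' f d \<inter> Wset \<sigma> n c B.
                a - b \<notin> (\<lambda>s. s - e) ` semigp \<sigma>"
begin

abbreviation "W \<equiv> Wset \<sigma> n c B"
abbreviation "V2 \<equiv> Vmon' f d \<inter> W"

lemma W_S: "x \<in> W \<Longrightarrow> x \<in> semigp \<sigma>"
  unfolding Wset_def by blast

lemma W_up: assumes "x \<in> W" "s \<in> semigp \<sigma>" shows "x + s \<in> W"
proof -
  obtain \<beta> where b: "\<beta> \<in> B" "x \<in> semigp \<sigma>" "\<forall>i<n. hint (c i) x \<ge> int (\<beta> i)"
    using assms(1) unfolding Wset_def by blast
  have "hint (c i) (x + s) \<ge> int (\<beta> i)" if "i < n" for i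
    using b(3)[rule_format, OF that] facet_nonneg[OF facets that assms(2)] by (simp add: hint_add)
  moreover have "x + s \<in> semigp \<sigma>" using b(2) assms(2) by (rule semigp_add)
  ultimately show ?thesis using b(1) unfolding Wset_def by blast
qed

lemma W_line: assumes "x \<in> W" "x + m *s e \<in> semigp \<sigma>" shows "x + m *s e \<in> W"
proof -
  obtain \<beta> where b: "\<beta> \<in> B" "x \<in> semigp \<sigma>" "\<forall>i<n. hint (c i) x \<ge> int (\<beta> i)"
    using assms(1) unfolding Wset_def by blast
  have "hint (c i) (x + m *s e) \<ge> int (\<beta> i)" if i: "i < n" for i
  proof (cases "\<beta> i = 0")
    case True then show ?thesis using facet_nonneg[OF facets i assms(2)] by simp
  next
    case False
    have "\<beta> i = 0 \<or> hint (c i) d = 0" using cB b(1) i unfolding compatible_def by blast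
    then have "hint (c i) d = 0" using False by blast
    then have "hint (c i) e = 0" using hint_e0 by blast
    then have "hint (c i) (x + m *s e) = hint (c i) x" by (simp add: hint_add hint_smult)
    then show ?thesis using b(3)[rule_format, OF i] by simp
  qed
  then show ?thesis using b(1) assms(2) unfolding Wset_def by blast
qed

lemma W_fin: assumes "x \<in> W" shows "fin x"
proof -
  have "val f d x > - \<infinity>" using c1 assms by blast
  then have "Zs x = {} \<or> fin x" by (simp only: val_gt_iff)
  then show ?thesis using Zs_ne by blast
qed

lemma V2_iff: "y \<in> V2 \<longleftrightarrow> y \<in> W \<and> (\<exists>a. y = vpt a \<and> fin a)"
  by (simp add: Vmon'_eq conj_commute)

lemma W_vpt: assumes "x \<in> W" shows "vpt x \<in> V2"
proof -
  have fx: "fin x" by (rule W_fin[OF assms])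
  have "vpt x \<in> semigp \<sigma>" by (rule vpt_S[OF W_S[OF assms] fx])
  then have "vpt x \<in> W" using W_line[OF assms] by (simp add: vpt_def)
  then show ?thesis unfolding V2_iff using fx by blast
qed

lemma V2_vpt: assumes "y \<in> V2" shows "vpt y = y" "fin y"
proof -
  obtain a where a: "fin a" "y = vpt a" using assms unfolding V2_iff by blast
  show "vpt y = y" using vpt_idem[OF a(1)] a(2) by simp
  show "fin y" using fin_vpt[OF a(1)] a(2) by simp
qed

definition GG where "GG = {a \<in> W. fin a \<and> kstar a \<ge> 0}"

lemma msum_eq: "msum V2 \<sigma> = GG"
proof (intro equalityI subsetI)
  fix a assume "a \<in> msum V2 \<sigma>"
  then obtain b s where bs: "a = b + s" "b \<in> V2" "s \<in> semigp \<sigma>" unfolding msum_def by blast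
  have aW: "a \<in> W" using W_up[of b s] bs by blast
  have fa: "fin a" by (rule W_fin[OF aW])
  have c0: "vpt a \<in> V2" by (rule W_vpt[OF aW])
  have "kstar a \<ge> 0"
  proof (rule ccontr)
    assume "\<not> kstar a \<ge> 0"
    then have m: "- kstar a - 1 \<ge> 0" by simp
    have "vpt a - b = (s + (- kstar a - 1) *s (- e)) - e"
      using bs(1) by (simp add: vpt_def vec_eq_iff algebra_simps)
    moreover have "s + (- kstar a - 1) *s (- e) \<in> semigp \<sigma>"
      using semigp_add[OF bs(3) semigp_smult[OF me_S m]] .
    ultimately have "vpt a - b \<in> (\<lambda>s. s - e) ` semigp \<sigma>" by blast
    then show False using c3[rule_format, OF c0 bs(2)] by blast
  qed
  then show "a \<in> GG" using aW fa by (simp add: GG_def)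
next
  fix a assume "a \<in> GG"
  then have a: "a \<in> W" "fin a" "kstar a \<ge> 0" by (auto simp: GG_def)
  have "vpt a \<in> V2" by (rule W_vpt[OF a(1)])
  moreover have "kstar a *s (- e) \<in> semigp \<sigma>" using semigp_smult[OF me_S a(3)] .
  moreover have "a = vpt a + kstar a *s (- e)" by (simp add: vpt_def vec_eq_iff)
  ultimately show "a \<in> msum V2 \<sigma>" unfolding msum_def by blast
qed

lemma Ep_GG: "Ep GG = GG"
proof (intro equalityI subsetI)
  fix x assume "x \<in> Ep GG"
  then have x: "x - d \<in> GG" "x - d \<notin> Vmon f" using Ep_iff by blast+
  define a where "a = x - d"
  have a: "a \<in> W" "fin a" "kstar a \<ge> 0" "a \<notin> Vmon f" using x by (auto simp: GG_def a_def)
  have c0: "vpt a \<in> V2" by (rule W_vpt[OF a(1)])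
  have kq: "kstar a \<ge> int q"
  proof (rule ccontr)
    assume "\<not> kstar a \<ge> int q"
    then have "nat (kstar a) < q" using a(3) by simp
    then have "vpt a - of_int (int (nat (kstar a))) *s e \<in> Vmon f" using c2[rule_format, OF c0] by blast
    moreover have "vpt a - of_int (int (nat (kstar a))) *s e = a" using a(3) by (simp add: vpt_def)
    ultimately show False using a(4) by simp
  qed
  have xe: "x = a + int q *s e" by (simp add: a_def d_eq)
  have "x = vpt a + (kstar a - int q) *s (- e)" by (simp add: xe vpt_def vec_eq_iff algebra_simps)
  moreover have "0 \<le> kstar a - int q" using kq by simp
  then have "(kstar a - int q) *s (- e) \<in> semigp \<sigma>" by (rule semigp_smult[OF me_S])
  moreover have "vpt a \<in> semigp \<sigma>" by (rule W_S[OF IntD2[OF c0]])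
  ultimately have "x \<in> semigp \<sigma>" using semigp_add by simp
  then have xW: "x \<in> W" using W_line[OF a(1)] xe by simp
  have "fin x" using fin_shift a(2) xe by simp
  moreover have "kstar x \<ge> 0" using kstar_shift[OF a(2)] kq xe by simp
  ultimately show "x \<in> GG" using xW by (simp add: GG_def)
next
  fix a assume "a \<in> GG"
  then have a: "a \<in> W" "fin a" "kstar a \<ge> 0" by (auto simp: GG_def)
  define b where "b = a + (- int q) *s e"
  have bd: "b = a - d" by (simp add: b_def d_eq vec_eq_iff)
  have "b \<in> W" using W_up[OF a(1) jme_S[of "int q"]] by (simp add: b_def)
  moreover have fb: "fin b" using fin_shift a(2) by (simp add: b_def)
  moreover have "kstar b \<ge> 0" using kstar_shift[OF a(2), of "- int q"] a(3) by (simp add: b_def)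
  ultimately have bG: "b \<in> GG" by (simp add: GG_def)
  have "b \<notin> Vmon f"
  proof
    assume "b \<in> Vmon f"
    then have "- int q \<in> Zs a" by (simp add: Zs_def b_def)
    then have "kmin a \<le> - int q" using kmin(2)[OF a(2)] by blast
    then show False using kstar(3)[OF a(2)] a(3) by simp
  qed
  then show "a \<in> Ep GG" using bG bd Ep_iff by simp
qed

lemma GG_eq: "GG = {a \<in> W. \<bar>val f d a\<bar> \<noteq> \<infinity> \<and> pval f d a \<ge> 0}"
proof -
  have "fin a \<and> kstar a \<ge> 0 \<longleftrightarrow> \<bar>val f d a\<bar> \<noteq> \<infinity> \<and> pval f d a \<ge> 0" for a
  proof (cases "fin a")
    case True
    have "pval f d a \<ge> 0 \<longleftrightarrow> kstar a \<ge> 0" using pval_eq[OF True] q by (simp add: zero_le_divide_iff)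
    then show ?thesis using True val_finite_iff[of a] by simp
  next
    case False then show ?thesis using val_finite_iff[of a] by simp
  qed
  then show ?thesis unfolding GG_def by (intro Collect_cong) simp
qed

lemma GG_ne: assumes "B \<noteq> {}" shows "GG \<noteq> {}"
proof -
  obtain \<beta> where b: "\<beta> \<in> B" using assms by blast
  obtain p where p: "p \<in> semigp \<sigma>" "\<forall>i<n. hint (c i) p \<ge> 1" using S_pos_point by blast
  define M where "M = (\<Sum>i<n. \<beta> i)"
  define x where "x = int M *s p"
  have "x \<in> semigp \<sigma>" unfolding x_def by (rule semigp_smult[OF p(1)]) simp
  moreover have "hint (c i) x \<ge> int (\<beta> i)" if i: "i < n" for i
  proof -
    have "\<beta> i \<le> M" unfolding M_def using i by (intro member_le_sum) auto
    moreover have "int M * 1 \<le> int M * hint (c i) p" using p(2) i by (intro mult_left_mono) auto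
    ultimately show ?thesis by (simp add: x_def hint_smult)
  qed
  ultimately have "x \<in> W" using b unfolding Wset_def by blast
  then have vx: "vpt x \<in> V2" by (rule W_vpt)
  have "vpt x + 0 \<in> msum V2 \<sigma>" unfolding msum_def
    using vx by (intro CollectI exI[of _ "vpt x"] exI[of _ "0::int^'n"]) simp
  then show ?thesis using msum_eq by auto
qed

end
end

theorem mainTheorem9:
  fixes \<sigma> :: "(real^'n::finite) set" and n :: nat and c :: "nat \<Rightarrow> int^'n"
    and f :: "'n cpoly" and d e :: "int^'n" and q :: nat
  assumes cone: "rat_poly_cone \<sigma>" and fulldim: "interior \<sigma> \<noteq> {}"
    and strong: "strongly_convex \<sigma>"
    and facets: "facet_functions \<sigma> n c"
    and hdiv: "Hpoly n c d dvd f"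
    and dnz: "d \<noteq> 0" and dS: "- d \<in> semigp \<sigma>"
    and q: "q \<ge> 1" and eprim: "primitive_vec e" and dqe: "d = (\<chi> j. int q * e $ j)"
  shows
    "((\<exists>I. monomial_ideal \<sigma> I \<and> I \<noteq> {0} \<and> delta f d ` I = I) \<longleftrightarrow>
       (\<exists>B. B \<noteq> {} \<and> compatible n c d B
          \<and> (\<forall>a\<in>Wset \<sigma> n c B. val f d a > -\<infinity>)
          \<and> (\<forall>a\<in>Vmon' f d \<inter> Wset \<sigma> n c B. \<forall>i<q. a - of_int (int i) *s e \<in> Vmon f)
          \<and> (\<forall>a\<in>Vmon' f d \<inter> Wset \<sigma> n c B. \<forall>b\<in>Vmon' f d \<inter> Wset \<sigma> n c B.
                a - b \<notin> (\<lambda>s. s - e) ` semigp \<sigma>)))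
     \<and> (\<forall>B. compatible n c d B
          \<and> (\<forall>a\<in>Wset \<sigma> n c B. val f d a > -\<infinity>)
          \<and> (\<forall>a\<in>Vmon' f d \<inter> Wset \<sigma> n c B. \<forall>i<q. a - of_int (int i) *s e \<in> Vmon f)
          \<and> (\<forall>a\<in>Vmon' f d \<inter> Wset \<sigma> n c B. \<forall>b\<in>Vmon' f d \<inter> Wset \<sigma> n c B.
                a - b \<notin> (\<lambda>s. s - e) ` semigp \<sigma>)
        \<longrightarrow> (let I = ideal_gen \<sigma> (monom ` (Vmon' f d \<inter> Wset \<sigma> n c B)) in
              delta f d ` I = I
              \<and> Exps \<sigma> I = {a \<in> Wset \<sigma> n c B. \<bar>val f d a\<bar> \<noteq> \<infinity> \<and> pval f d a \<ge> 0}))"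
proof -
  interpret M: main_setup \<sigma> n c f d e q
    by unfold_locales (fact cone fulldim strong facets hdiv dnz dS q eprim dqe)+
  have dPE: "delta f d ` PE E = PE (M.Ep E)" for E
    by (simp add: delta_PE M.Ep_def)
  have constr: "PE (M.GG B) = ideal_gen \<sigma> (monom ` (Vmon' f d \<inter> Wset \<sigma> n c B))
      \<and> delta f d ` PE (M.GG B) = PE (M.GG B)
      \<and> Exps \<sigma> (PE (M.GG B)) = {a \<in> Wset \<sigma> n c B. \<bar>val f d a\<bar> \<noteq> \<infinity> \<and> pval f d a \<ge> 0}
      \<and> monomial_ideal \<sigma> (PE (M.GG B))
      \<and> (B \<noteq> {} \<longrightarrow> PE (M.GG B) \<noteq> {0})"
    if cB: "compatible n c d B"
      and c1: "\<forall>a\<in>Wset \<sigma> n c B. val f d a > -\<infinity>"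
      and c2: "\<forall>a\<in>Vmon' f d \<inter> Wset \<sigma> n c B. \<forall>i<q. a - of_int (int i) *s e \<in> Vmon f"
      and c3: "\<forall>a\<in>Vmon' f d \<inter> Wset \<sigma> n c B. \<forall>b\<in>Vmon' f d \<inter> Wset \<sigma> n c B.
                a - b \<notin> (\<lambda>s. s - e) ` semigp \<sigma>" for B
  proof -
    have V2S: "Vmon' f d \<inter> Wset \<sigma> n c B \<subseteq> semigp \<sigma>" by (auto simp: Wset_def)
    have GGm: "msum (Vmon' f d \<inter> Wset \<sigma> n c B) \<sigma> = M.GG B" by (rule M.msum_eq[OF cB c1 c2 c3])
    have up: "upw \<sigma> (M.GG B)" using upw_msum[OF V2S] GGm by simp
    have GS: "M.GG B \<subseteq> semigp \<sigma>" using up by (simp add: upw_def)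
    have i1: "PE (M.GG B) = ideal_gen \<sigma> (monom ` (Vmon' f d \<inter> Wset \<sigma> n c B))"
      using ideal_gen_monom[OF V2S] GGm by simp
    have i2: "delta f d ` PE (M.GG B) = PE (M.GG B)"
      using dPE M.Ep_GG[OF cB c1 c2 c3] by simp
    have i3: "Exps \<sigma> (PE (M.GG B)) = {a \<in> Wset \<sigma> n c B. \<bar>val f d a\<bar> \<noteq> \<infinity> \<and> pval f d a \<ge> 0}"
      using Exps_PE[OF GS] M.GG_eq[OF cB c1 c2 c3] by simp
    have "{monom a | a. monom a \<in> PE (M.GG B)} = monom ` M.GG B"
      by (auto simp: monom_PE)
    then have "ideal_gen \<sigma> {monom a | a. monom a \<in> PE (M.GG B)} = PE (M.GG B)"
      using ideal_gen_monom[OF GS] msum_self[OF up] by simp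
    then have i4: "monomial_ideal \<sigma> (PE (M.GG B))"
      unfolding monomial_ideal_def using is_ideal_PE[OF up] by simp
    have i5: "B \<noteq> {} \<longrightarrow> PE (M.GG B) \<noteq> {0}"
      using M.GG_ne[OF cB c1 c2 c3] PE_zero by blast
    show ?thesis by (intro conjI i1 i2 i3 i4 i5)
  qed
  have part1: "(\<exists>I. monomial_ideal \<sigma> I \<and> I \<noteq> {0} \<and> delta f d ` I = I) \<longleftrightarrow>
       (\<exists>B. B \<noteq> {} \<and> compatible n c d B
          \<and> (\<forall>a\<in>Wset \<sigma> n c B. val f d a > -\<infinity>)
          \<and> (\<forall>a\<in>Vmon' f d \<inter> Wset \<sigma> n c B. \<forall>i<q. a - of_int (int i) *s e \<in> Vmon f)
          \<and> (\<forall>a\<in>Vmon' f d \<inter> Wset \<sigma> n c B. \<forall>b\<in>Vmon' f d \<inter> Wset \<sigma> n c B.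
                a - b \<notin> (\<lambda>s. s - e) ` semigp \<sigma>))"
  proof
    assume "\<exists>I. monomial_ideal \<sigma> I \<and> I \<noteq> {0} \<and> delta f d ` I = I"
    then obtain I where I: "monomial_ideal \<sigma> I" "I \<noteq> {0}" "delta f d ` I = I" by blast
    define E where "E = Exps \<sigma> I"
    have up: "upw \<sigma> E" and IE: "I = PE E" using monomial_ideal_PE[OF I(1)] by (simp_all add: E_def)
    have "PE (M.Ep E) = PE E" using I(3) dPE IE by simp
    then have fx: "M.Ep E = E" by (rule PE_inj)
    have ne: "E \<noteq> {}" using I(2) IE PE_zero by blast
    show "\<exists>B. B \<noteq> {} \<and> compatible n c d B
          \<and> (\<forall>a\<in>Wset \<sigma> n c B. val f d a > -\<infinity>)
          \<and> (\<forall>a\<in>Vmon' f d \<inter> Wset \<sigma> n c B. \<forall>i<q. a - of_int (int i) *s e \<in> Vmon f)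
          \<and> (\<forall>a\<in>Vmon' f d \<inter> Wset \<sigma> n c B. \<forall>b\<in>Vmon' f d \<inter> Wset \<sigma> n c B.
                a - b \<notin> (\<lambda>s. s - e) ` semigp \<sigma>)"
      by (rule M.lhs_to_rhs[OF up fx ne])
  next
    assume "\<exists>B. B \<noteq> {} \<and> compatible n c d B
          \<and> (\<forall>a\<in>Wset \<sigma> n c B. val f d a > -\<infinity>)
          \<and> (\<forall>a\<in>Vmon' f d \<inter> Wset \<sigma> n c B. \<forall>i<q. a - of_int (int i) *s e \<in> Vmon f)
          \<and> (\<forall>a\<in>Vmon' f d \<inter> Wset \<sigma> n c B. \<forall>b\<in>Vmon' f d \<inter> Wset \<sigma> n c B.
                a - b \<notin> (\<lambda>s. s - e) ` semigp \<sigma>)"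
    then obtain B where B: "B \<noteq> {}" "compatible n c d B"
          "\<forall>a\<in>Wset \<sigma> n c B. val f d a > -\<infinity>"
          "\<forall>a\<in>Vmon' f d \<inter> Wset \<sigma> n c B. \<forall>i<q. a - of_int (int i) *s e \<in> Vmon f"
          "\<forall>a\<in>Vmon' f d \<inter> Wset \<sigma> n c B. \<forall>b\<in>Vmon' f d \<inter> Wset \<sigma> n c B.
                a - b \<notin> (\<lambda>s. s - e) ` semigp \<sigma>" by blast
    note cs = constr[OF B(2) B(3) B(4) B(5)]
    have m1: "monomial_ideal \<sigma> (PE (M.GG B))" using cs by (elim conjE)
    have m2: "PE (M.GG B) \<noteq> {0}" using cs B(1) by (elim conjE) (erule mp)
    have m3: "delta f d ` PE (M.GG B) = PE (M.GG B)" using cs by (elim conjE)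
    show "\<exists>I. monomial_ideal \<sigma> I \<and> I \<noteq> {0} \<and> delta f d ` I = I"
      by (intro exI[of _ "PE (M.GG B)"] conjI m1 m2 m3)
  qed
  have part2: "\<forall>B. compatible n c d B
          \<and> (\<forall>a\<in>Wset \<sigma> n c B. val f d a > -\<infinity>)
          \<and> (\<forall>a\<in>Vmon' f d \<inter> Wset \<sigma> n c B. \<forall>i<q. a - of_int (int i) *s e \<in> Vmon f)
          \<and> (\<forall>a\<in>Vmon' f d \<inter> Wset \<sigma> n c B. \<forall>b\<in>Vmon' f d \<inter> Wset \<sigma> n c B.
                a - b \<notin> (\<lambda>s. s - e) ` semigp \<sigma>)
        \<longrightarrow> (let I = ideal_gen \<sigma> (monom ` (Vmon' f d \<inter> Wset \<sigma> n c B)) in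
              delta f d ` I = I
              \<and> Exps \<sigma> I = {a \<in> Wset \<sigma> n c B. \<bar>val f d a\<bar> \<noteq> \<infinity> \<and> pval f d a \<ge> 0})"
  proof (intro allI impI)
    fix B assume B: "compatible n c d B
          \<and> (\<forall>a\<in>Wset \<sigma> n c B. val f d a > -\<infinity>)
          \<and> (\<forall>a\<in>Vmon' f d \<inter> Wset \<sigma> n c B. \<forall>i<q. a - of_int (int i) *s e \<in> Vmon f)
          \<and> (\<forall>a\<in>Vmon' f d \<inter> Wset \<sigma> n c B. \<forall>b\<in>Vmon' f d \<inter> Wset \<sigma> n c B.
                a - b \<notin> (\<lambda>s. s - e) ` semigp \<sigma>)"
    have cs: "PE (M.GG B) = ideal_gen \<sigma> (monom ` (Vmon' f d \<inter> Wset \<sigma> n c B))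
      \<and> delta f d ` PE (M.GG B) = PE (M.GG B)
      \<and> Exps \<sigma> (PE (M.GG B)) = {a \<in> Wset \<sigma> n c B. \<bar>val f d a\<bar> \<noteq> \<infinity> \<and> pval f d a \<ge> 0}
      \<and> monomial_ideal \<sigma> (PE (M.GG B))
      \<and> (B \<noteq> {} \<longrightarrow> PE (M.GG B) \<noteq> {0})"
      by (rule constr[OF conjunct1[OF B] conjunct1[OF conjunct2[OF B]]
          conjunct1[OF conjunct2[OF conjunct2[OF B]]] conjunct2[OF conjunct2[OF conjunct2[OF B]]]])
    show "let I = ideal_gen \<sigma> (monom ` (Vmon' f d \<inter> Wset \<sigma> n c B)) in
              delta f d ` I = I
              \<and> Exps \<sigma> I = {a \<in> Wset \<sigma> n c B. \<bar>val f d a\<bar> \<noteq> \<infinity> \<and> pval f d a \<ge> 0}"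
    proof -
      have m1: "PE (M.GG B) = ideal_gen \<sigma> (monom ` (Vmon' f d \<inter> Wset \<sigma> n c B))" using cs by (elim conjE)
      have m2: "delta f d ` PE (M.GG B) = PE (M.GG B)" using cs by (elim conjE)
      have m3: "Exps \<sigma> (PE (M.GG B)) = {a \<in> Wset \<sigma> n c B. \<bar>val f d a\<bar> \<noteq> \<infinity> \<and> pval f d a \<ge> 0}" using cs by (elim conjE)
      show ?thesis unfolding Let_def m1[symmetric] using m2 m3 by (rule conjI)
    qed
  qed
  show ?thesis using part1 part2 by (rule conjI)
qed


end
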